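(* Consider the discrete-time system $x_{k+1}=A_kx_k+b_ku_k$, $y_k=c_kx_k$ ($k\in\mathbb{Z}$) with $A_k\in\mathbb{R}^{n\times n}$, $b_k\in\mathbb{R}^{n\times1}$, $c_k\in\mathbb{R}^{1\times n}$. If the system is completely controllable, completely observable and $c_k\operatorname{adj}(A_k)b_k\neq0$ for every $k\in\mathbb{Z}$, then there exists a linear time-varying output-feedback controller of the form $u_k=F_ky_k$ (with scalars $F_k$) that steers any initial state at any time to the origin in $2(n^4+n^3+n^2)$ steps.
   Context: Complete controllability: for every $k\in\mathbb{Z}$ and every $\xi_s,\xi_f\in\mathbb{R}^n$ there are controls $u_k,\dots,u_{k+n-1}$ with $x_k=\xi_s\Rightarrow x_{k+n}=\xi_f$. Complete observability: for every $k\in\mathbb{Z}$ and all controls $u_k,\dots,u_{k+n-2}$, $x_k$ is uniquely determined by $y_k,\dots,y_{k+n-1}$. $\operatorname{adj}(A)$ is the adjugate of $A$ (so $A\operatorname{adj}(A)=\det(A)I$). Under $u_k=F_ky_k$ the closed-loop dynamics are $x_{k+1}=(A_k+F_kb_kc_k)x_k$. *)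

theory Defs
  imports "Jordan_Normal_Form.Determinant"
begin

text \<open>Matrices are Jordan_Normal_Form matrices; the state dimension is n.
  A k is n x n, b k is n x 1, c k is 1 x n; time k ranges over int.\<close>

fun traj :: "(int \<Rightarrow> real mat) \<Rightarrow> (int \<Rightarrow> real mat) \<Rightarrow> (int \<Rightarrow> real)
              \<Rightarrow> int \<Rightarrow> real vec \<Rightarrow> nat \<Rightarrow> real vec" where
  "traj A b u k xi 0 = xi"
| "traj A b u k xi (Suc m) =
     A (k + int m) *\<^sub>v traj A b u k xi m + u (k + int m) \<cdot>\<^sub>v col (b (k + int m)) 0"

definition sys_output :: "(int \<Rightarrow> real mat) \<Rightarrow> int \<Rightarrow> real vec \<Rightarrow> real" where
  "sys_output c j x = (c j *\<^sub>v x) $ 0"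

definition completely_controllable ::
  "nat \<Rightarrow> (int \<Rightarrow> real mat) \<Rightarrow> (int \<Rightarrow> real mat) \<Rightarrow> bool" where
  "completely_controllable n A b \<longleftrightarrow>
     (\<forall>k. \<forall>xs \<in> carrier_vec n. \<forall>xf \<in> carrier_vec n.
        \<exists>u. traj A b u k xs n = xf)"

definition completely_observable ::
  "nat \<Rightarrow> (int \<Rightarrow> real mat) \<Rightarrow> (int \<Rightarrow> real mat) \<Rightarrow> (int \<Rightarrow> real mat) \<Rightarrow> bool" where
  "completely_observable n A b c \<longleftrightarrow>
     (\<forall>k u. \<forall>x1 \<in> carrier_vec n. \<forall>x2 \<in> carrier_vec n.
        (\<forall>i<n. sys_output c (k + int i) (traj A b u k x1 i)
               = sys_output c (k + int i) (traj A b u k x2 i)) \<longrightarrow> x1 = x2)"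

text \<open>Closed-loop trajectory under u_j = F_j y_j: x_{j+1} = (A_j + F_j b_j c_j) x_j.\<close>
fun cl_traj :: "(int \<Rightarrow> real mat) \<Rightarrow> (int \<Rightarrow> real mat) \<Rightarrow> (int \<Rightarrow> real mat)
              \<Rightarrow> (int \<Rightarrow> real) \<Rightarrow> int \<Rightarrow> real vec \<Rightarrow> nat \<Rightarrow> real vec" where
  "cl_traj A b c F k xi 0 = xi"
| "cl_traj A b c F k xi (Suc m) =
     (A (k + int m) + F (k + int m) \<cdot>\<^sub>m (b (k + int m) * c (k + int m)))
        *\<^sub>v cl_traj A b c F k xi m"

end

theory Submission
  imports Defs
begin

definition lc :: "nat \<Rightarrow> (nat \<Rightarrow> real vec) \<Rightarrow> (nat \<Rightarrow> real) \<Rightarrow> nat set \<Rightarrow> real vec" where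
  "lc n f c I = vec n (\<lambda>r. \<Sum>i\<in>I. c i * f i $ r)"

lemma lc_carrier[simp]: "lc n f c I \<in> carrier_vec n" by (simp add: lc_def)
lemma dim_lc[simp]: "dim_vec (lc n f c I) = n" by (simp add: lc_def)
lemma index_lc[simp]: "r < n \<Longrightarrow> lc n f c I $ r = (\<Sum>i\<in>I. c i * f i $ r)" by (simp add: lc_def)

lemma lc_cong: "(\<And>i. i \<in> I \<Longrightarrow> c i = d i) \<Longrightarrow> (\<And>i r. i \<in> I \<Longrightarrow> r < n \<Longrightarrow> f i $ r = g i $ r)
   \<Longrightarrow> lc n f c I = lc n g d I"
  by (intro eq_vecI, auto intro!: sum.cong)

lemma lc_zero_coef: "(\<And>i. i \<in> I \<Longrightarrow> c i = 0) \<Longrightarrow> lc n f c I = 0\<^sub>v n"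
  by (intro eq_vecI, auto)

lemma lc_empty[simp]: "lc n f c {} = 0\<^sub>v n" by (intro eq_vecI, auto)

lemma lc_add_coef: "lc n f (\<lambda>i. c i + d i) I = lc n f c I + lc n f d I"
  by (intro eq_vecI, auto simp: sum.distrib algebra_simps)

lemma lc_diff_coef: "lc n f (\<lambda>i. c i - d i) I = lc n f c I - lc n f d I"
  by (intro eq_vecI, auto simp: sum_subtractf algebra_simps)

lemma lc_smult_coef: "lc n f (\<lambda>i. a * c i) I = a \<cdot>\<^sub>v lc n f c I"
  by (intro eq_vecI, auto simp: sum_distrib_left algebra_simps)

lemma lc_insert: "finite I \<Longrightarrow> k \<notin> I \<Longrightarrow> f k \<in> carrier_vec n \<Longrightarrow>
   lc n f c (insert k I) = c k \<cdot>\<^sub>v f k + lc n f c I"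
  by (intro eq_vecI, auto)

lemma lc_union: "finite I \<Longrightarrow> finite J \<Longrightarrow> I \<inter> J = {} \<Longrightarrow>
   lc n f c (I \<union> J) = lc n f c I + lc n f c J"
  by (intro eq_vecI, auto simp: sum.union_disjoint)

lemma lc_mono_neutral: "finite J \<Longrightarrow> I \<subseteq> J \<Longrightarrow> (\<And>i. i \<in> J - I \<Longrightarrow> c i = 0) \<Longrightarrow>
   lc n f c J = lc n f c I"
  by (intro eq_vecI, auto intro!: sum.mono_neutral_right)

lemma lc_single: assumes fin: "finite I" and k: "k \<in> I" and f: "f k \<in> carrier_vec n"
  shows "lc n f (\<lambda>i. if i = k then a else 0) I = a \<cdot>\<^sub>v f k"
proof (intro eq_vecI)
  fix r assume r: "r < dim_vec (a \<cdot>\<^sub>v f k)"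
  then have rn: "r < n" using f by auto
  have "lc n f (\<lambda>i. if i = k then a else 0) I $ r = (\<Sum>i\<in>I. (if i = k then a else 0) * f i $ r)"
    using rn by simp
  also have "\<dots> = (\<Sum>i\<in>I. if i = k then a * f k $ r else 0)" by (rule sum.cong, auto)
  also have "\<dots> = a * f k $ r" using fin k by simp
  finally show "lc n f (\<lambda>i. if i = k then a else 0) I $ r = (a \<cdot>\<^sub>v f k) $ r" using rn f by simp
qed (insert f, auto)

lemma lc_mult: assumes A: "A \<in> carrier_mat n n" and f: "\<And>i. i \<in> I \<Longrightarrow> f i \<in> carrier_vec n"
  shows "A *\<^sub>v lc n f c I = lc n (\<lambda>i. A *\<^sub>v f i) c I"
proof (intro eq_vecI)
  have fd: "\<And>i. i \<in> I \<Longrightarrow> dim_vec (f i) = n" using f by auto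
  fix r assume "r < dim_vec (lc n (\<lambda>i. A *\<^sub>v f i) c I)"
  then have r: "r < n" by simp
  have "(A *\<^sub>v lc n f c I) $ r = (\<Sum>k<n. A $$ (r,k) * (\<Sum>i\<in>I. c i * f i $ k))"
    using A r by (simp add: scalar_prod_def lessThan_atLeast0)
  also have "\<dots> = (\<Sum>k<n. \<Sum>i\<in>I. A $$ (r,k) * (c i * f i $ k))" by (simp add: sum_distrib_left)
  also have "\<dots> = (\<Sum>i\<in>I. \<Sum>k<n. A $$ (r,k) * (c i * f i $ k))" by (rule sum.swap)
  also have "\<dots> = (\<Sum>i\<in>I. c i * (A *\<^sub>v f i) $ r)"
    using A r fd by (auto intro!: sum.cong simp: scalar_prod_def sum_distrib_left lessThan_atLeast0 algebra_simps)
  also have "\<dots> = lc n (\<lambda>i. A *\<^sub>v f i) c I $ r" using r by simp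
  finally show "(A *\<^sub>v lc n f c I) $ r = lc n (\<lambda>i. A *\<^sub>v f i) c I $ r" .
qed (insert A, auto)

lemma scalar_lc: assumes v: "v \<in> carrier_vec n" and f: "\<And>i. i \<in> I \<Longrightarrow> f i \<in> carrier_vec n"
  shows "v \<bullet> lc n f c I = (\<Sum>i\<in>I. c i * (v \<bullet> f i))"
proof -
  have fd: "\<And>i. i \<in> I \<Longrightarrow> dim_vec (f i) = n" using f by auto
  have "v \<bullet> lc n f c I = (\<Sum>k<n. v $ k * (\<Sum>i\<in>I. c i * f i $ k))"
    by (simp add: scalar_prod_def lessThan_atLeast0)
  also have "\<dots> = (\<Sum>k<n. \<Sum>i\<in>I. v $ k * (c i * f i $ k))" by (simp add: sum_distrib_left)
  also have "\<dots> = (\<Sum>i\<in>I. \<Sum>k<n. v $ k * (c i * f i $ k))" by (rule sum.swap)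
  also have "\<dots> = (\<Sum>i\<in>I. c i * (v \<bullet> f i))"
    using fd by (auto intro!: sum.cong simp: scalar_prod_def sum_distrib_left lessThan_atLeast0 algebra_simps)
  finally show ?thesis .
qed

definition spn :: "nat \<Rightarrow> (nat \<Rightarrow> real vec) \<Rightarrow> nat set \<Rightarrow> real vec set" where
  "spn n f I = {v. \<exists>c. v = lc n f c I}"

lemma spn_carrier: "spn n f I \<subseteq> carrier_vec n" by (auto simp: spn_def)
lemma spn_carrier': "v \<in> spn n f I \<Longrightarrow> v \<in> carrier_vec n" by (auto simp: spn_def)
lemma spnI: "v = lc n f c I \<Longrightarrow> v \<in> spn n f I" by (auto simp: spn_def)
lemma spnE: "v \<in> spn n f I \<Longrightarrow> (\<And>c. v = lc n f c I \<Longrightarrow> P) \<Longrightarrow> P" by (auto simp: spn_def)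
lemma spn_zero: "0\<^sub>v n \<in> spn n f I"
  by (rule spnI[of _ _ _ "\<lambda>_. 0"], rule lc_zero_coef[symmetric], auto)
lemma spn_add: "x \<in> spn n f I \<Longrightarrow> y \<in> spn n f I \<Longrightarrow> x + y \<in> spn n f I"
  by (auto simp: spn_def lc_add_coef[symmetric])
lemma spn_diff: "x \<in> spn n f I \<Longrightarrow> y \<in> spn n f I \<Longrightarrow> x - y \<in> spn n f I"
  by (auto simp: spn_def lc_diff_coef[symmetric])
lemma spn_smult: "x \<in> spn n f I \<Longrightarrow> a \<cdot>\<^sub>v x \<in> spn n f I"
  by (auto simp: spn_def lc_smult_coef[symmetric])
lemma spn_gen: "finite I \<Longrightarrow> k \<in> I \<Longrightarrow> f k \<in> carrier_vec n \<Longrightarrow> f k \<in> spn n f I"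
  using lc_single[of I k f n 1] by (intro spnI[of _ _ _ "\<lambda>i. if i = k then 1 else 0"], auto)

lemma spn_closed: assumes K: "finite K" and v: "\<And>k. k \<in> K \<Longrightarrow> v k \<in> spn n f I"
  shows "lc n v d K \<in> spn n f I"
proof -
  have "\<forall>k\<in>K. \<exists>c. v k = lc n f c I" using v by (auto simp: spn_def)
  then obtain C where C: "\<And>k. k \<in> K \<Longrightarrow> v k = lc n f (C k) I" by metis
  show ?thesis
  proof (rule spnI[of _ _ _ "\<lambda>i. \<Sum>k\<in>K. d k * C k i"], intro eq_vecI)
    fix r assume "r < dim_vec (lc n f (\<lambda>i. \<Sum>k\<in>K. d k * C k i) I)"
    then have r: "r < n" by simp
    have "lc n v d K $ r = (\<Sum>k\<in>K. d k * (\<Sum>i\<in>I. C k i * f i $ r))"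
      using r C by (auto intro!: sum.cong)
    also have "\<dots> = (\<Sum>k\<in>K. \<Sum>i\<in>I. d k * C k i * f i $ r)" by (simp add: sum_distrib_left algebra_simps)
    also have "\<dots> = (\<Sum>i\<in>I. \<Sum>k\<in>K. d k * C k i * f i $ r)" by (rule sum.swap)
    also have "\<dots> = lc n f (\<lambda>i. \<Sum>k\<in>K. d k * C k i) I $ r" using r by (simp add: sum_distrib_right)
    finally show "lc n v d K $ r = lc n f (\<lambda>i. \<Sum>k\<in>K. d k * C k i) I $ r" .
  qed auto
qed

definition indep :: "nat \<Rightarrow> (nat \<Rightarrow> real vec) \<Rightarrow> nat set \<Rightarrow> bool" where
  "indep n f I \<longleftrightarrow> finite I \<and> (\<forall>i\<in>I. f i \<in> carrier_vec n) \<and> (\<forall>c. lc n f c I = 0\<^sub>v n \<longrightarrow> (\<forall>i\<in>I. c i = 0))"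

lemma indep_subset: assumes "indep n f I" "J \<subseteq> I" shows "indep n f J"
  unfolding indep_def
proof (intro conjI allI impI ballI)
  show "finite J" using assms by (auto simp: indep_def intro: finite_subset)
  show "\<And>i. i \<in> J \<Longrightarrow> f i \<in> carrier_vec n" using assms by (auto simp: indep_def)
  fix c i assume lc: "lc n f c J = 0\<^sub>v n" and i: "i \<in> J"
  let ?c = "\<lambda>i. if i \<in> J then c i else 0"
  have fin: "finite I" using assms by (auto simp: indep_def)
  have "lc n f ?c I = lc n f ?c J" by (rule lc_mono_neutral, insert assms fin, auto)
  also have "\<dots> = lc n f c J" by (rule lc_cong, auto)
  finally have "lc n f ?c I = 0\<^sub>v n" using lc by simp
  then have "\<forall>i\<in>I. ?c i = 0" using assms(1) unfolding indep_def by blast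
  then have "?c i = 0" using assms(2) i by blast
  then show "c i = 0" using i by simp
qed

lemma indep_insert: assumes ind: "indep n f I" and k: "k \<notin> I" and v: "v \<in> carrier_vec n"
  and nv: "v \<notin> spn n f I"
  shows "indep n (f(k := v)) (insert k I)"
  unfolding indep_def
proof (intro conjI allI impI ballI)
  have fin: "finite I" using ind by (auto simp: indep_def)
  then show "finite (insert k I)" by simp
  show "\<And>i. i \<in> insert k I \<Longrightarrow> (f(k := v)) i \<in> carrier_vec n" using ind v by (auto simp: indep_def)
  fix c i assume lc0: "lc n (f(k := v)) c (insert k I) = 0\<^sub>v n" and i: "i \<in> insert k I"
  have e1: "lc n (f(k := v)) c (insert k I) = c k \<cdot>\<^sub>v (f(k := v)) k + lc n (f(k := v)) c I"
    by (rule lc_insert[OF fin k], insert v, simp)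
  have e3: "lc n (f(k := v)) c I = lc n f c I" by (rule lc_cong, insert k, auto)
  have eq: "c k \<cdot>\<^sub>v v + lc n f c I = 0\<^sub>v n" using lc0 unfolding e1 e3 fun_upd_same .
  have ck: "c k = 0"
  proof (rule ccontr)
    assume ck: "c k \<noteq> 0"
    have "v = lc n f (\<lambda>i. - c i / c k) I"
    proof (intro eq_vecI)
      fix r assume r: "r < dim_vec (lc n f (\<lambda>i. - c i / c k) I)"
      then have rn: "r < n" by simp
      from arg_cong[OF eq, of "\<lambda>x. x $ r"] have "c k * v $ r + (\<Sum>i\<in>I. c i * f i $ r) = 0"
        using rn v by simp
      then have "v $ r = - (\<Sum>i\<in>I. c i * f i $ r) / c k" using ck by (simp add: field_simps)
      also have "\<dots> = (\<Sum>i\<in>I. - c i / c k * f i $ r)"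
        by (simp add: sum_divide_distrib sum_negf[symmetric])
      finally show "v $ r = lc n f (\<lambda>i. - c i / c k) I $ r" using rn by simp
    qed (insert v, auto)
    then show False using nv by (auto simp: spn_def)
  qed
  have "lc n f c I = c k \<cdot>\<^sub>v v + lc n f c I" using ck v by (intro eq_vecI, auto)
  then have "lc n f c I = 0\<^sub>v n" using eq by simp
  then have "\<forall>i\<in>I. c i = 0" using ind by (auto simp: indep_def)
  then show "c i = 0" using i ck by auto
qed

lemma indep_card: assumes ind: "indep n f I" shows "card I \<le> n"
proof (rule ccontr)
  assume "\<not> card I \<le> n"
  then have nk: "n < card I" by simp
  define k where "k = card I"
  have fin: "finite I" using ind by (auto simp: indep_def)
  obtain h where h: "bij_betw h {0..<k} I" using ex_bij_betw_nat_finite[OF fin] unfolding k_def by auto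
  define M where "M = mat k k (\<lambda>(i,j). if i < n then f (h j) $ i else (0::real))"
  have "M = mat\<^sub>r k k (\<lambda>i. if i = n then 0\<^sub>v k else vec k (\<lambda>j. if i < n then f (h j) $ i else 0))"
    unfolding M_def by (intro eq_matI, auto)
  also have "det \<dots> = 0" by (rule det_row_0, insert nk, auto simp: k_def)
  finally have "det M = 0" .
  moreover have M: "M \<in> carrier_mat k k" unfolding M_def by auto
  ultimately obtain v where v: "v \<in> carrier_vec k" "v \<noteq> 0\<^sub>v k" "M *\<^sub>v v = 0\<^sub>v k"
    using det_0_iff_vec_prod_zero by blast
  define c where "c = (\<lambda>i. v $ (inv_into {0..<k} h i))"
  have hinv: "\<And>j. j < k \<Longrightarrow> inv_into {0..<k} h (h j) = j"
    using h by (simp add: bij_betw_def inv_into_f_f)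
  have "lc n f c I = 0\<^sub>v n"
  proof (intro eq_vecI)
    fix r assume "r < dim_vec (0\<^sub>v n :: real vec)"
    then have r: "r < n" by simp
    have "lc n f c I $ r = (\<Sum>i\<in>I. c i * f i $ r)" using r by simp
    also have "\<dots> = (\<Sum>j\<in>{0..<k}. c (h j) * f (h j) $ r)"
      by (rule sum.reindex_bij_betw[symmetric, OF h])
    also have "\<dots> = (\<Sum>j\<in>{0..<k}. v $ j * f (h j) $ r)" by (rule sum.cong, auto simp: c_def hinv)
    also have "\<dots> = (M *\<^sub>v v) $ r"
      using r nk v(1) unfolding M_def k_def[symmetric]
      by (auto simp: scalar_prod_def algebra_simps intro!: sum.cong)
    also have "\<dots> = 0" using v r nk by (simp add: k_def)
    finally show "lc n f c I $ r = 0\<^sub>v n $ r" using r by simp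
  qed auto
  then have "\<forall>i\<in>I. c i = 0" using ind by (auto simp: indep_def)
  then have "\<forall>j<k. v $ j = 0" using h hinv unfolding c_def bij_betw_def by force
  then have "v = 0\<^sub>v k" using v by (intro eq_vecI, auto)
  then show False using v by simp
qed

definition dimS :: "nat \<Rightarrow> real vec set \<Rightarrow> nat" where
  "dimS n W = Max {card I | I. \<exists>f. indep n f I \<and> f ` I \<subseteq> W}"

lemma dimS_set: "finite {card I | I. \<exists>f. indep n f I \<and> f ` I \<subseteq> W}"
   "{card I | I. \<exists>f. indep n f I \<and> f ` I \<subseteq> W} \<noteq> {}"
proof -
  show "finite {card I | I. \<exists>f. indep n f I \<and> f ` I \<subseteq> W}"
    by (rule finite_subset[of _ "{..n}"], auto dest: indep_card)
  have "indep n f {}" for f by (auto simp: indep_def)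
  then show "{card I | I. \<exists>f. indep n f I \<and> f ` I \<subseteq> W} \<noteq> {}" by blast
qed

lemma dim_ge: "indep n f I \<Longrightarrow> f ` I \<subseteq> W \<Longrightarrow> card I \<le> dimS n W"
  unfolding dimS_def by (rule Max_ge[OF dimS_set(1)], auto)

lemma dim_ex: "\<exists>f I. indep n f I \<and> f ` I \<subseteq> W \<and> card I = dimS n W"
proof -
  have "dimS n W \<in> {card I | I. \<exists>f. indep n f I \<and> f ` I \<subseteq> W}"
    unfolding dimS_def by (rule Max_in[OF dimS_set])
  then obtain I f where "dimS n W = card I" "indep n f I" "f ` I \<subseteq> W" by auto
  then show ?thesis by (intro exI[of _ f] exI[of _ I], auto)
qed

lemma dim_le: "dimS n W \<le> n"
  using dim_ex[of n W] indep_card by metis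

lemma dim_mono: "W1 \<subseteq> W2 \<Longrightarrow> dimS n W1 \<le> dimS n W2"
  using dim_ex[of n W1] dim_ge[of n _ _ W2] by (metis subset_trans)

lemma span_max: assumes W: "W \<subseteq> carrier_vec n" and ind: "indep n f I" and fI: "f ` I \<subseteq> W"
  and card: "card I = dimS n W" and v: "v \<in> W"
  shows "v \<in> spn n f I"
proof (rule ccontr)
  assume nv: "v \<notin> spn n f I"
  have fin: "finite I" using ind by (auto simp: indep_def)
  obtain k :: nat where k: "k \<notin> I" using ex_new_if_finite[OF infinite_UNIV_nat fin] by auto
  have "indep n (f(k := v)) (insert k I)" by (rule indep_insert[OF ind k _ nv], insert v W, auto)
  moreover have "(f(k := v)) ` insert k I \<subseteq> W" using fI v k by auto
  ultimately have "card (insert k I) \<le> dimS n W" by (rule dim_ge)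
  then show False using card fin k by simp
qed

lemma span_square_indep: assumes f: "\<And>i. i < n \<Longrightarrow> f i \<in> carrier_vec n"
  and sp: "\<And>v. v \<in> carrier_vec n \<Longrightarrow> v \<in> spn n f {..<n}"
  shows "indep n f {..<n}"
proof -
  define K where "K = mat n n (\<lambda>(r,j). f j $ r)"
  have K: "K \<in> carrier_mat n n" unfolding K_def by simp
  have Kv: "K *\<^sub>v vec n c = lc n f c {..<n}" for c
    by (intro eq_vecI, auto simp: K_def scalar_prod_def lessThan_atLeast0 algebra_simps intro!: sum.cong)
  have "\<forall>r<n. \<exists>c. unit_vec n r = lc n f c {..<n}" using sp by (auto simp: spn_def)
  then obtain C where C: "\<And>r. r < n \<Longrightarrow> unit_vec n r = lc n f (C r) {..<n}" by metis
  define Cm where "Cm = mat n n (\<lambda>(j,r). C r j)"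
  have Cm: "Cm \<in> carrier_mat n n" unfolding Cm_def by simp
  have "K * Cm = 1\<^sub>m n"
  proof (intro eq_matI)
    fix i r assume i: "i < dim_row (1\<^sub>m n :: real mat)" and r: "r < dim_col (1\<^sub>m n :: real mat)"
    have "(K * Cm) $$ (i, r) = (\<Sum>j<n. f j $ i * C r j)"
      using i r by (simp add: K_def Cm_def scalar_prod_def lessThan_atLeast0)
    also have "\<dots> = lc n f (C r) {..<n} $ i" using i by (simp add: algebra_simps)
    also have "\<dots> = unit_vec n r $ i" using C r by simp
    also have "\<dots> = (1\<^sub>m n :: real mat) $$ (i, r)" using i r by simp
    finally show "(K * Cm) $$ (i, r) = (1\<^sub>m n :: real mat) $$ (i, r)" .
  qed (insert K Cm, auto)
  then have "det K * det Cm = 1" using det_mult[OF K Cm] by simp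
  then have dK: "det K \<noteq> 0" by auto
  show ?thesis unfolding indep_def
  proof (intro conjI allI impI ballI)
    fix c i assume lc0: "lc n f c {..<n} = 0\<^sub>v n" and i: "i \<in> {..<n}"
    have "K *\<^sub>v vec n c = 0\<^sub>v n" using Kv lc0 by simp
    moreover have "\<not> (\<exists>v. v \<in> carrier_vec n \<and> v \<noteq> 0\<^sub>v n \<and> K *\<^sub>v v = 0\<^sub>v n)"
      using det_0_iff_vec_prod_zero[OF K] dK by simp
    ultimately have "vec n c = 0\<^sub>v n" using vec_carrier[of n c] by blast
    then show "c i = 0" using i by (metis index_vec index_zero_vec(1) lessThan_iff)
  qed (insert f, auto)
qed

lemma spn_mono: assumes J: "finite J" and IJ: "I \<subseteq> J" shows "spn n f I \<subseteq> spn n f J"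
proof
  fix v assume "v \<in> spn n f I"
  then obtain c where v: "v = lc n f c I" by (auto simp: spn_def)
  let ?c = "\<lambda>i. if i \<in> I then c i else 0"
  have "lc n f ?c J = lc n f ?c I" by (rule lc_mono_neutral[OF J IJ], auto)
  also have "\<dots> = lc n f c I" by (rule lc_cong, auto)
  finally show "v \<in> spn n f J" using v by (intro spnI[of _ _ _ ?c], simp)
qed

lemma indep_lc_eq: assumes ind: "indep n f I" and eq: "lc n f c I = lc n f d I"
  and i: "i \<in> I" shows "c i = d i"
proof -
  have "lc n f (\<lambda>i. c i - d i) I = 0\<^sub>v n" using eq by (simp add: lc_diff_coef)
  then have "\<forall>i\<in>I. c i - d i = 0" using ind unfolding indep_def by blast
  then show ?thesis using i by auto
qed

lemma smult_mat_vec: "B \<in> carrier_mat n n \<Longrightarrow> x \<in> carrier_vec n \<Longrightarrow>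
  (a \<cdot>\<^sub>m B) *\<^sub>v x = (a::real) \<cdot>\<^sub>v (B *\<^sub>v x)"
  by (intro eq_vecI) (auto simp: scalar_prod_def sum_distrib_left algebra_simps)

lemma smult_one_mat_vec: "x \<in> carrier_vec n \<Longrightarrow> (a \<cdot>\<^sub>m 1\<^sub>m n) *\<^sub>v x = (a::real) \<cdot>\<^sub>v x"
  by (subst smult_mat_vec, auto)

lemma mat_vec_zero: "B \<in> carrier_mat n m \<Longrightarrow> B *\<^sub>v 0\<^sub>v m = (0\<^sub>v n :: real vec)"
  by (intro eq_vecI) (auto simp: scalar_prod_def)

lemma replace_col_mult: assumes A: "(A :: real mat) \<in> carrier_mat n n" and v: "v \<in> carrier_vec n"
  and y: "y \<in> carrier_vec n" and j: "j < n"
  shows "replace_col A v j *\<^sub>v y = A *\<^sub>v y + y $ j \<cdot>\<^sub>v (v - col A j)"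
proof (intro eq_vecI)
  fix r assume "r < dim_vec (A *\<^sub>v y + y $ j \<cdot>\<^sub>v (v - col A j))"
  then have r: "r < n" using A by simp
  have "(replace_col A v j *\<^sub>v y) $ r = (\<Sum>k<n. (if k = j then v $ r else A $$ (r,k)) * y $ k)"
    using A y r by (simp add: replace_col_def scalar_prod_def lessThan_atLeast0)
  also have "\<dots> = (\<Sum>k<n. A $$ (r,k) * y $ k + (if k = j then (v $ r - A $$ (r,j)) * y $ j else 0))"
    by (rule sum.cong, auto simp: algebra_simps)
  also have "\<dots> = (\<Sum>k<n. A $$ (r,k) * y $ k) + (v $ r - A $$ (r,j)) * y $ j"
    using j by (simp add: sum.distrib)
  also have "\<dots> = (A *\<^sub>v y + y $ j \<cdot>\<^sub>v (v - col A j)) $ r"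
    using A y r v j by (simp add: scalar_prod_def lessThan_atLeast0 algebra_simps)
  finally show "(replace_col A v j *\<^sub>v y) $ r = (A *\<^sub>v y + y $ j \<cdot>\<^sub>v (v - col A j)) $ r" .
qed (insert A v, auto simp: replace_col_def)

lemma adj_replace_col: assumes A: "(A :: real mat) \<in> carrier_mat n n" and b: "b \<in> carrier_vec n" and k: "k < n"
  shows "(adj_mat A *\<^sub>v b) $ k = det (replace_col A b k)"
proof -
  let ?Ab = "replace_col A b k"
  have Ab: "?Ab \<in> carrier_mat n n" using A by (auto simp: replace_col_def)
  have "(adj_mat A *\<^sub>v b) $ k = row (adj_mat A) k \<bullet> b" using adj_mat[OF A] b k by auto
  also have "\<dots> = det (replace_col A b k)" unfolding scalar_prod_def using b k A
    by (subst laplace_expansion_column[OF Ab k], auto intro!: sum.cong arg_cong[of _ _ det]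
      arg_cong[of _ _ "\<lambda> x. _ * x"] eq_matI
      simp: replace_col_def adj_mat_def Matrix.row_def cofactor_def mat_delete_def ac_simps)
  finally show ?thesis .
qed

locale sys =
  fixes n :: nat and A b c :: "int \<Rightarrow> real mat"
  assumes dimA: "\<And>k. A k \<in> carrier_mat n n"
    and dimb: "\<And>k. b k \<in> carrier_mat n 1"
    and dimc: "\<And>k. c k \<in> carrier_mat 1 n"
    and ctrb: "completely_controllable n A b"
    and obsv: "completely_observable n A b c"
    and adj: "\<And>k. (c k * adj_mat (A k) * b k) $$ (0, 0) \<noteq> 0"
begin

definition bv where "bv t = col (b t) 0"
definition cv where "cv t = row (c t) 0"
definition wv where "wv t = adj_mat (A t) *\<^sub>v bv t"
definition dA where "dA t = det (A t)"

lemma bv_carrier[simp]: "bv t \<in> carrier_vec n" using dimb[of t] by (auto simp: bv_def)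
lemma cv_carrier[simp]: "cv t \<in> carrier_vec n" using dimc[of t] by (auto simp: cv_def)
lemma wv_carrier[simp]: "wv t \<in> carrier_vec n" using dimA[of t] adj_mat(1)[OF dimA[of t]]
  by (auto simp: wv_def)
lemma dim_wv[simp]: "dim_vec (wv t) = n" using wv_carrier[of t] by (simp only: carrier_vec_def, simp)
lemma dim_bv[simp]: "dim_vec (bv t) = n" using bv_carrier[of t] by (simp only: carrier_vec_def, simp)
lemma dim_cv[simp]: "dim_vec (cv t) = n" using cv_carrier[of t] by (simp only: carrier_vec_def, simp)
lemma dim_row_A[simp]: "dim_row (A t) = n" using dimA[of t] by auto
lemma dim_col_A[simp]: "dim_col (A t) = n" using dimA[of t] by auto
lemma A_carrier[simp]: "A t \<in> carrier_mat n n" by (rule dimA)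
lemma mult_A_carrier[simp]: "x \<in> carrier_vec n \<Longrightarrow> A t *\<^sub>v x \<in> carrier_vec n"
  by (rule mult_mat_vec_carrier[OF dimA])

lemma cw: "cv t \<bullet> wv t \<noteq> 0"
proof -
  have aA: "adj_mat (A t) \<in> carrier_mat n n" by (rule adj_mat(1)[OF dimA])
  have "c t * adj_mat (A t) * b t = c t * (adj_mat (A t) * b t)"
    by (rule assoc_mult_mat[OF dimc aA dimb])
  then have "(c t * adj_mat (A t) * b t) $$ (0,0) = row (c t) 0 \<bullet> col (adj_mat (A t) * b t) 0"
    using dimc[of t] aA dimb[of t] by (simp add: index_mult_mat)
  also have "col (adj_mat (A t) * b t) 0 = adj_mat (A t) *\<^sub>v col (b t) 0"
    by (rule col_mult2[OF aA dimb], simp)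
  finally show ?thesis using adj[of t] by (simp add: cv_def wv_def bv_def)
qed

lemma wv_nz: "wv t \<noteq> 0\<^sub>v n"
  using cw[of t] by (metis cv_carrier scalar_prod_right_zero)

lemma A_w: "A t *\<^sub>v wv t = dA t \<cdot>\<^sub>v bv t"
proof -
  have aA: "adj_mat (A t) \<in> carrier_mat n n" by (rule adj_mat(1)[OF dimA])
  have "A t *\<^sub>v wv t = (A t * adj_mat (A t)) *\<^sub>v bv t"
    unfolding wv_def by (rule assoc_mult_mat_vec[symmetric, OF dimA aA bv_carrier])
  also have "\<dots> = (dA t \<cdot>\<^sub>m 1\<^sub>m n) *\<^sub>v bv t" using adj_mat(2)[OF dimA[of t]] by (simp add: dA_def)
  also have "\<dots> = dA t \<cdot>\<^sub>v bv t" by (rule smult_one_mat_vec, simp)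
  finally show ?thesis .
qed

lemma adj_A: assumes y: "y \<in> carrier_vec n" shows "adj_mat (A t) *\<^sub>v (A t *\<^sub>v y) = dA t \<cdot>\<^sub>v y"
proof -
  have aA: "adj_mat (A t) \<in> carrier_mat n n" by (rule adj_mat(1)[OF dimA])
  have "adj_mat (A t) *\<^sub>v (A t *\<^sub>v y) = (adj_mat (A t) * A t) *\<^sub>v y"
    by (rule assoc_mult_mat_vec[symmetric, OF aA dimA y])
  also have "\<dots> = (dA t \<cdot>\<^sub>m 1\<^sub>m n) *\<^sub>v y" using adj_mat(3)[OF dimA[of t]] by (simp add: dA_def)
  also have "\<dots> = dA t \<cdot>\<^sub>v y" using y by (rule smult_one_mat_vec)
  finally show ?thesis .
qed

lemma b_in_image: assumes y: "y \<in> carrier_vec n" and hby: "bv t = A t *\<^sub>v y"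
  shows "wv t = dA t \<cdot>\<^sub>v y" "dA t \<noteq> 0"
proof -
  show w: "wv t = dA t \<cdot>\<^sub>v y" unfolding wv_def by (subst hby, rule adj_A[OF y])
  show "dA t \<noteq> 0"
  proof
    assume "dA t = 0"
    then have "wv t = 0\<^sub>v n" using w y by auto
    then show False using wv_nz by simp
  qed
qed

lemma ker_A: assumes x: "x \<in> carrier_vec n" and Ax: "A t *\<^sub>v x = 0\<^sub>v n"
  shows "\<exists>\<beta>. x = \<beta> \<cdot>\<^sub>v wv t"
proof (cases "dA t = 0")
  case False
  have "dA t \<cdot>\<^sub>v x = 0\<^sub>v n" using adj_A[OF x, of t] Ax mat_vec_zero[OF adj_mat(1)[OF dimA[of t]]] by simp
  note h = this
  have "x = 0\<^sub>v n"
  proof (intro eq_vecI)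
    fix i assume "i < dim_vec (0\<^sub>v n :: real vec)" then have i: "i < n" by simp
    have "(dA t \<cdot>\<^sub>v x) $ i = 0" using h i by simp
    then have "dA t * x $ i = 0" using x i by simp
    then show "x $ i = 0\<^sub>v n $ i" using False i by simp
  qed (use x in auto)
  then show ?thesis using x wv_carrier[of t] by (intro exI[of _ 0], intro eq_vecI, auto)
next
  case True
  define w where "w = wv t"
  have w: "w \<in> carrier_vec n" "w \<noteq> 0\<^sub>v n" unfolding w_def using wv_nz by auto
  then obtain j where j: "j < n" "w $ j \<noteq> 0" by (metis eq_vecI carrier_vecD index_zero_vec)
  define B where "B = replace_col (A t) (bv t) j"
  have B: "B \<in> carrier_mat n n" using dimA[of t] by (auto simp: B_def replace_col_def)
  have dB: "det B = w $ j" unfolding B_def w_def wv_def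
    by (rule adj_replace_col[symmetric, OF dimA bv_carrier j(1)])
  define y where "y = w $ j \<cdot>\<^sub>v x - x $ j \<cdot>\<^sub>v w"
  have y: "y \<in> carrier_vec n" using x w by (auto simp: y_def)
  have Ay: "A t *\<^sub>v y = 0\<^sub>v n"
  proof -
    have "A t *\<^sub>v y = A t *\<^sub>v (w $ j \<cdot>\<^sub>v x) - A t *\<^sub>v (x $ j \<cdot>\<^sub>v w)"
      unfolding y_def by (rule mult_minus_distrib_mat_vec[OF dimA], insert x w, auto)
    also have "\<dots> = w $ j \<cdot>\<^sub>v (A t *\<^sub>v x) - x $ j \<cdot>\<^sub>v (A t *\<^sub>v w)"
      using mult_mat_vec[OF dimA x] mult_mat_vec[OF dimA w(1)] by simp
    also have "A t *\<^sub>v w = 0\<^sub>v n" using A_w[of t] True by (auto simp: w_def)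
    finally show ?thesis using Ax by (intro eq_vecI, auto)
  qed
  have yj: "y $ j = 0" using x w j by (simp add: y_def)
  have "B *\<^sub>v y = A t *\<^sub>v y + y $ j \<cdot>\<^sub>v (bv t - col (A t) j)" unfolding B_def
    by (rule replace_col_mult[OF dimA bv_carrier y j(1)])
  also have "\<dots> = 0\<^sub>v n" using Ay yj by (intro eq_vecI, auto)
  finally have "B *\<^sub>v y = 0\<^sub>v n" .
  then have "y = 0\<^sub>v n" using det_0_iff_vec_prod_zero[OF B] dB j y by auto
  note y0 = this
  have "\<forall>r<n. w $ j * x $ r = x $ j * w $ r"
  proof (intro allI impI)
    fix r assume r: "r < n"
    have "y $ r = 0" using y0 r by simp
    then show "w $ j * x $ r = x $ j * w $ r" using x w r by (simp add: y_def)
  qed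
  then have "x = (x $ j / w $ j) \<cdot>\<^sub>v w" using x w j by (intro eq_vecI, auto simp: field_simps)
  then show ?thesis unfolding w_def by blast
qed

lemma sys_output_eq: "x \<in> carrier_vec n \<Longrightarrow> sys_output c t x = cv t \<bullet> x"
  using dimc[of t] by (simp add: sys_output_def cv_def)

end

context sys begin

fun fev :: "int \<Rightarrow> real vec \<Rightarrow> nat \<Rightarrow> real vec" where
  "fev t v 0 = v" | "fev t v (Suc m) = A (t + int m) *\<^sub>v fev t v m"

fun Rr :: "int \<Rightarrow> nat \<Rightarrow> real vec" where
  "Rr s 0 = bv s" | "Rr s (Suc m) = A (s + 1 + int m) *\<^sub>v Rr s m"

lemma fev_carrier[simp]: "v \<in> carrier_vec n \<Longrightarrow> fev t v m \<in> carrier_vec n" by (induct m) auto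
lemma Rr_carrier[simp]: "Rr s m \<in> carrier_vec n" by (induct m) auto
lemma dim_fev[simp]: "v \<in> carrier_vec n \<Longrightarrow> dim_vec (fev t v m) = n"
  using fev_carrier[of v t m] by (simp only: carrier_vec_def, simp)
lemma dim_Rr[simp]: "dim_vec (Rr s m) = n"
  using Rr_carrier[of s m] by (simp only: carrier_vec_def, simp)

lemma traj_Suc: "traj A b u t xi (Suc m) = A (t + int m) *\<^sub>v traj A b u t xi m + u (t + int m) \<cdot>\<^sub>v bv (t + int m)"
  by (simp add: bv_def)

lemma traj_carrier[simp]: "xi \<in> carrier_vec n \<Longrightarrow> traj A b u t xi m \<in> carrier_vec n"
  by (induct m) (auto simp: traj_Suc simp del: traj.simps(2))

lemma dim_traj[simp]: "xi \<in> carrier_vec n \<Longrightarrow> dim_vec (traj A b u t xi m) = n"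
  using traj_carrier[of xi u t m] by (simp only: carrier_vec_def, simp)

lemma Rr_Suc_shift: "i < m \<Longrightarrow> A (t + int m) *\<^sub>v Rr (t + int i) (m - Suc i) = Rr (t + int i) (m - i)"
proof -
  assume i: "i < m"
  then have "m - i = Suc (m - Suc i)" by simp
  moreover have "t + int i + 1 + int (m - Suc i) = t + int m" using i by simp
  ultimately show ?thesis by simp
qed

lemma traj_decomp: assumes xi: "xi \<in> carrier_vec n"
  shows "traj A b u t xi m = fev t xi m + lc n (\<lambda>i. Rr (t + int i) (m - i - 1)) (\<lambda>i. u (t + int i)) {..<m}"
proof (induct m)
  case 0
  show ?case using xi by (intro eq_vecI, auto)
next
  case (Suc m)
  let ?f = "\<lambda>m i. Rr (t + int i) (m - i - 1)"
  let ?c = "\<lambda>i. u (t + int i)"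
  have "traj A b u t xi (Suc m) = A (t + int m) *\<^sub>v (fev t xi m + lc n (?f m) ?c {..<m}) + u (t + int m) \<cdot>\<^sub>v bv (t + int m)"
    by (simp only: traj_Suc Suc)
  also have "A (t + int m) *\<^sub>v (fev t xi m + lc n (?f m) ?c {..<m}) = fev t xi (Suc m) + A (t + int m) *\<^sub>v lc n (?f m) ?c {..<m}"
    using xi by (simp add: mult_add_distrib_mat_vec[OF dimA])
  also have "A (t + int m) *\<^sub>v lc n (?f m) ?c {..<m} = lc n (\<lambda>i. A (t + int m) *\<^sub>v ?f m i) ?c {..<m}"
    by (rule lc_mult, auto)
  also have "\<dots> = lc n (?f (Suc m)) ?c {..<m}" by (rule lc_cong, auto simp: Rr_Suc_shift)
  finally have "traj A b u t xi (Suc m) = fev t xi (Suc m) + lc n (?f (Suc m)) ?c {..<m} + u (t + int m) \<cdot>\<^sub>v bv (t + int m)" .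
  also have "\<dots> = fev t xi (Suc m) + (u (t + int m) \<cdot>\<^sub>v ?f (Suc m) m + lc n (?f (Suc m)) ?c {..<m})"
    using xi by (intro eq_vecI, auto)
  also have "u (t + int m) \<cdot>\<^sub>v ?f (Suc m) m + lc n (?f (Suc m)) ?c {..<m} = lc n (?f (Suc m)) ?c {..<Suc m}"
    by (subst lessThan_Suc, rule lc_insert[symmetric], auto)
  finally show ?case .
qed

lemma fev_lc: "(\<And>i. i \<in> I \<Longrightarrow> f i \<in> carrier_vec n) \<Longrightarrow> fev t (lc n f d I) m = lc n (\<lambda>i. fev t (f i) m) d I"
proof (induct m)
  case (Suc m)
  then show ?case by (simp, subst lc_mult, auto)
qed simp

lemma fev_add: "x \<in> carrier_vec n \<Longrightarrow> y \<in> carrier_vec n \<Longrightarrow> fev t (x + y) m = fev t x m + fev t y m"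
  by (induct m) (auto simp: mult_add_distrib_mat_vec[OF dimA])

lemma fev_smult: "x \<in> carrier_vec n \<Longrightarrow> fev t (a \<cdot>\<^sub>v x) m = a \<cdot>\<^sub>v fev t x m"
  by (induct m) (auto simp: mult_mat_vec[OF dimA])

lemma fev_zero: "fev t (0\<^sub>v n) m = 0\<^sub>v n"
  by (induct m) (auto simp: mat_vec_zero[OF dimA])

lemma fev_comp: "fev t v (m1 + m2) = fev (t + int m1) (fev t v m1) m2"
  by (induct m2) (auto simp: add.assoc)

lemma traj_cong: "(\<And>i. i < m \<Longrightarrow> u (t + int i) = u' (t + int i)) \<Longrightarrow> traj A b u t xi m = traj A b u' t xi m"
  by (induct m) auto

lemma traj_comp: "traj A b u t xi (m1 + m2) = traj A b u (t + int m1) (traj A b u t xi m1) m2"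
  by (induct m2) (auto simp: add.assoc)

lemma traj_zero_input: "(\<And>i. i < m \<Longrightarrow> u (t + int i) = 0) \<Longrightarrow> traj A b u t (0\<^sub>v n) m = 0\<^sub>v n"
proof (induct m)
  case (Suc m)
  then have "traj A b u t (0\<^sub>v n) m = 0\<^sub>v n" "u (t + int m) = 0" by auto
  then show ?case by (simp only: traj_Suc, intro eq_vecI, auto simp: mat_vec_zero[OF dimA])
qed simp

lemma traj_fev: "xi \<in> carrier_vec n \<Longrightarrow> traj A b (\<lambda>_. 0) t xi m = fev t xi m"
  by (subst traj_decomp, auto intro!: eq_vecI)

lemma traj_affine: assumes xi: "xi \<in> carrier_vec n"
  shows "traj A b (\<lambda>s. u s + a * (q s - u s)) t xi m
    = traj A b u t xi m + a \<cdot>\<^sub>v (traj A b q t xi m - traj A b u t xi m)"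
  unfolding traj_decomp[OF xi] using xi by (intro eq_vecI)
    (auto simp: algebra_simps sum.distrib sum_distrib_left sum_subtractf)

lemma cl_step: assumes x: "x \<in> carrier_vec n"
  shows "(A t + F \<cdot>\<^sub>m (b t * c t)) *\<^sub>v x = A t *\<^sub>v x + (F * (cv t \<bullet> x)) \<cdot>\<^sub>v bv t"
proof (intro eq_vecI)
  fix r assume "r < dim_vec (A t *\<^sub>v x + (F * (cv t \<bullet> x)) \<cdot>\<^sub>v bv t)"
  then have r: "r < n" by simp
  have bc: "b t * c t \<in> carrier_mat n n" using dimb[of t] dimc[of t] by auto
  have "((A t + F \<cdot>\<^sub>m (b t * c t)) *\<^sub>v x) $ r = (\<Sum>k<n. (A t $$ (r,k) + F * (b t $$ (r,0) * c t $$ (0,k))) * x $ k)"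
    using r x bc dimb[of t] dimc[of t]
    by (auto simp: scalar_prod_def lessThan_atLeast0 intro!: sum.cong)
  also have "\<dots> = (A t *\<^sub>v x) $ r + F * (cv t \<bullet> x) * bv t $ r"
    using r x dimb[of t] dimc[of t]
    by (auto simp: scalar_prod_def lessThan_atLeast0 sum.distrib sum_distrib_left algebra_simps cv_def bv_def
      intro!: sum.cong)
  finally show "((A t + F \<cdot>\<^sub>m (b t * c t)) *\<^sub>v x) $ r = (A t *\<^sub>v x + (F * (cv t \<bullet> x)) \<cdot>\<^sub>v bv t) $ r"
    using r x by simp
qed (insert x dimb[of t] dimc[of t], auto)

lemma cl_carrier[simp]: "xi \<in> carrier_vec n \<Longrightarrow> cl_traj A b c F t xi m \<in> carrier_vec n"
proof (induct m)
  case (Suc m) then show ?case by (simp add: cl_step)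
qed simp

lemma cl_comp: "cl_traj A b c F t xi (m1 + m2) = cl_traj A b c F (t + int m1) (cl_traj A b c F t xi m1) m2"
  by (induct m2) (auto simp: add.assoc)

lemma cl_cong: "(\<And>i. i < m \<Longrightarrow> F (t + int i) = F' (t + int i)) \<Longrightarrow> cl_traj A b c F t xi m = cl_traj A b c F' t xi m"
  by (induct m) auto

lemma cl_zero: "cl_traj A b c F t (0\<^sub>v n) m = 0\<^sub>v n"
proof (induct m)
  case (Suc m) then show ?case by (simp add: cl_step, intro eq_vecI, auto simp: mat_vec_zero[OF dimA])
qed simp

lemma cl_eq_traj: assumes xi: "xi \<in> carrier_vec n"
  and F: "\<And>i. i < m \<Longrightarrow> F (t + int i) * (cv (t + int i) \<bullet> traj A b u t xi i) = u (t + int i)"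
  shows "cl_traj A b c F t xi m = traj A b u t xi m"
  using F
proof (induct m)
  case (Suc m)
  then have IH: "cl_traj A b c F t xi m = traj A b u t xi m" by auto
  have "cl_traj A b c F t xi (Suc m) = A (t + int m) *\<^sub>v traj A b u t xi m
     + (F (t + int m) * (cv (t + int m) \<bullet> traj A b u t xi m)) \<cdot>\<^sub>v bv (t + int m)"
    using IH xi by (simp add: cl_step)
  also have "\<dots> = traj A b u t xi (Suc m)" using Suc(2)[of m] by (simp add: bv_def)
  finally show ?case .
qed simp

end

locale vsys = sys +
  fixes \<tau> :: int and z :: "real vec"
  assumes z: "z \<in> carrier_vec n"
begin

definition cond :: "nat \<Rightarrow> nat set \<Rightarrow> bool" where
  "cond i S \<longleftrightarrow> cv (\<tau> + int i) \<bullet> fev \<tau> z i \<noteq> 0 \<or>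
      (\<exists>j\<in>S. cv (\<tau> + int i) \<bullet> Rr (\<tau> + int j) (i - j - 1) \<noteq> 0)"

primrec frs :: "nat \<Rightarrow> nat set" where
  "frs 0 = {}"
| "frs (Suc i) = frs i \<union> (if cond i (frs i) then {i} else {})"

definition isfree :: "nat \<Rightarrow> bool" where "isfree i \<longleftrightarrow> i \<in> frs (Suc i)"

lemma frs_sub: "frs i \<subseteq> {..<i}"
  by (induct i) auto

lemma isfree_cond: "isfree i \<longleftrightarrow> cond i (frs i)"
proof -
  have "i \<notin> frs i" using frs_sub by auto
  then show ?thesis unfolding isfree_def frs.simps(2) by auto
qed

lemma frs_eq: "frs i = {j. j < i \<and> isfree j}"
proof (induct i)
  case (Suc i)
  have "frs (Suc i) = frs i \<union> (if isfree i then {i} else {})"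
    unfolding frs.simps(2) isfree_cond[of i] ..
  also have "\<dots> = {j. j < i \<and> isfree j} \<union> (if isfree i then {i} else {})"
    unfolding Suc ..
  also have "\<dots> = {j. j < Suc i \<and> isfree j}" by (auto simp: less_Suc_eq)
  finally show ?case .
qed simp

lemma finite_frs[simp]: "finite (frs i)" using frs_sub[of i] finite_subset by blast

lemma isfree_iff: "isfree i \<longleftrightarrow> (cv (\<tau> + int i) \<bullet> fev \<tau> z i \<noteq> 0 \<or>
      (\<exists>j. j < i \<and> isfree j \<and> cv (\<tau> + int i) \<bullet> Rr (\<tau> + int j) (i - j - 1) \<noteq> 0))"
  unfolding isfree_cond[of i] cond_def frs_eq[of i] by auto

definition fam :: "nat \<Rightarrow> nat \<Rightarrow> real vec" where "fam m i = Rr (\<tau> + int i) (m - i - 1)"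
definition pp :: "nat \<Rightarrow> real vec" where "pp m = fev \<tau> z m"
definition LL :: "nat \<Rightarrow> real vec set" where "LL m = spn n (fam m) (frs m)"
definition VV :: "nat \<Rightarrow> real vec set" where "VV m = {\<theta> \<cdot>\<^sub>v pp m + l | \<theta> l. l \<in> LL m}"
definition aa where "aa m = dimS n (LL m)"
definition ee where "ee m = dimS n (VV m)"

lemma fam_carrier[simp]: "fam m i \<in> carrier_vec n" by (simp add: fam_def)
lemma pp_carrier[simp]: "pp m \<in> carrier_vec n" using z by (simp add: pp_def)
lemma LL_carrier: "LL m \<subseteq> carrier_vec n" unfolding LL_def by (rule spn_carrier)
lemma LL_carrier'[simp]: "x \<in> LL m \<Longrightarrow> x \<in> carrier_vec n" using LL_carrier by auto
lemma dim_pp[simp]: "dim_vec (pp m) = n" using pp_carrier[of m] by (simp only: carrier_vec_def, simp)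
lemma dim_LL[simp]: "x \<in> LL m \<Longrightarrow> dim_vec x = n" using LL_carrier'[of x m] by (simp only: carrier_vec_def, simp)
lemma VV_carrier: "VV m \<subseteq> carrier_vec n" unfolding VV_def using LL_carrier by auto
lemma VV_carrier'[simp]: "x \<in> VV m \<Longrightarrow> x \<in> carrier_vec n" using VV_carrier by auto

lemma LL_VV: "LL m \<subseteq> VV m"
proof
  fix x assume x: "x \<in> LL m"
  then have "x = 0 \<cdot>\<^sub>v pp m + x" by (intro eq_vecI, auto)
  then show "x \<in> VV m" using x unfolding VV_def by blast
qed

lemma pp_VV: "pp m \<in> VV m"
proof -
  have "0\<^sub>v n \<in> LL m" unfolding LL_def by (rule spn_zero)
  moreover have "pp m = 1 \<cdot>\<^sub>v pp m + 0\<^sub>v n" by (intro eq_vecI, auto)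
  ultimately show ?thesis unfolding VV_def by blast
qed

lemma LL_add: "x \<in> LL m \<Longrightarrow> y \<in> LL m \<Longrightarrow> x + y \<in> LL m" unfolding LL_def by (rule spn_add)
lemma LL_diff: "x \<in> LL m \<Longrightarrow> y \<in> LL m \<Longrightarrow> x - y \<in> LL m" unfolding LL_def by (rule spn_diff)
lemma LL_smult: "x \<in> LL m \<Longrightarrow> a \<cdot>\<^sub>v x \<in> LL m" unfolding LL_def by (rule spn_smult)
lemma LL_lc: "finite K \<Longrightarrow> (\<And>k. k \<in> K \<Longrightarrow> v k \<in> LL m) \<Longrightarrow> lc n v d K \<in> LL m"
  unfolding LL_def by (rule spn_closed)
lemma LL_gen: "i \<in> frs m \<Longrightarrow> fam m i \<in> LL m" unfolding LL_def by (rule spn_gen, auto)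

lemma VV_lc: assumes K: "finite K" and v: "\<And>k. k \<in> K \<Longrightarrow> v k \<in> VV m" shows "lc n v d K \<in> VV m"
proof -
  have "\<forall>k\<in>K. \<exists>p. v k = fst p \<cdot>\<^sub>v pp m + snd p \<and> snd p \<in> LL m"
  proof
    fix k assume "k \<in> K"
    then obtain th l where "v k = th \<cdot>\<^sub>v pp m + l" "l \<in> LL m" using v[of k] unfolding VV_def by auto
    then show "\<exists>p. v k = fst p \<cdot>\<^sub>v pp m + snd p \<and> snd p \<in> LL m" by (intro exI[of _ "(th, l)"], auto)
  qed
  from bchoice[OF this] obtain P where P: "\<forall>k\<in>K. v k = fst (P k) \<cdot>\<^sub>v pp m + snd (P k) \<and> snd (P k) \<in> LL m" ..
  define th where "th = (\<lambda>k. fst (P k))"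
  define l where "l = (\<lambda>k. snd (P k))"
  have thl: "\<And>k. k \<in> K \<Longrightarrow> v k = th k \<cdot>\<^sub>v pp m + l k \<and> l k \<in> LL m" using P by (auto simp: th_def l_def)
  have "lc n v d K = (\<Sum>k\<in>K. d k * th k) \<cdot>\<^sub>v pp m + lc n l d K"
  proof (intro eq_vecI)
    fix r assume "r < dim_vec ((\<Sum>k\<in>K. d k * th k) \<cdot>\<^sub>v pp m + lc n l d K)"
    then have r: "r < n" by simp
    have "lc n v d K $ r = (\<Sum>k\<in>K. d k * v k $ r)" using r by simp
    also have "\<dots> = (\<Sum>k\<in>K. d k * (th k * pp m $ r + l k $ r))"
    proof (rule sum.cong[OF refl])
      fix k assume k: "k \<in> K"
      then have "v k = th k \<cdot>\<^sub>v pp m + l k" "l k \<in> LL m" using thl by auto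
      then show "d k * v k $ r = d k * (th k * pp m $ r + l k $ r)" using r by simp
    qed
    also have "\<dots> = ((\<Sum>k\<in>K. d k * th k) \<cdot>\<^sub>v pp m + lc n l d K) $ r"
      using r by (simp add: algebra_simps sum.distrib sum_distrib_right sum_distrib_left)
    finally show "lc n v d K $ r = ((\<Sum>k\<in>K. d k * th k) \<cdot>\<^sub>v pp m + lc n l d K) $ r" .
  qed auto
  moreover have "lc n l d K \<in> LL m" by (rule LL_lc[OF K], insert thl, auto)
  ultimately show ?thesis unfolding VV_def by blast
qed

lemma fam_shift: "i < m \<Longrightarrow> A (\<tau> + int m) *\<^sub>v fam m i = fam (Suc m) i"
  unfolding fam_def using Rr_Suc_shift[of i m \<tau>] by simp

lemma fam_last: "fam (Suc m) m = bv (\<tau> + int m)" by (simp add: fam_def)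

lemma pp_shift: "A (\<tau> + int m) *\<^sub>v pp m = pp (Suc m)" by (simp add: pp_def)

lemma LL_shift: assumes x: "x \<in> LL m" shows "A (\<tau> + int m) *\<^sub>v x \<in> LL (Suc m)"
proof -
  obtain c where xc: "x = lc n (fam m) c (frs m)" using x unfolding LL_def spn_def by auto
  have "A (\<tau> + int m) *\<^sub>v x = lc n (\<lambda>i. A (\<tau> + int m) *\<^sub>v fam m i) c (frs m)"
    unfolding xc by (rule lc_mult, auto)
  also have "\<dots> = lc n (fam (Suc m)) c (frs m)"
  proof (rule lc_cong)
    fix i r assume "i \<in> frs m"
    then have "i < m" using frs_sub by auto
    then show "(A (\<tau> + int m) *\<^sub>v fam m i) $ r = fam (Suc m) i $ r" by (simp only: fam_shift)
  qed simp
  finally have "A (\<tau> + int m) *\<^sub>v x \<in> spn n (fam (Suc m)) (frs m)" by (rule spnI)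
  moreover have "spn n (fam (Suc m)) (frs m) \<subseteq> LL (Suc m)" unfolding LL_def
    by (rule spn_mono, auto)
  ultimately show ?thesis by auto
qed

lemma VV_shift: assumes x: "x \<in> VV m" shows "A (\<tau> + int m) *\<^sub>v x \<in> VV (Suc m)"
proof -
  obtain th l where x: "x = th \<cdot>\<^sub>v pp m + l" and l: "l \<in> LL m" using x unfolding VV_def by auto
  have "A (\<tau> + int m) *\<^sub>v x = th \<cdot>\<^sub>v pp (Suc m) + A (\<tau> + int m) *\<^sub>v l"
    unfolding x using l
    by (simp add: mult_add_distrib_mat_vec[OF dimA] mult_mat_vec[OF dimA] pp_shift)
  moreover have "A (\<tau> + int m) *\<^sub>v l \<in> LL (Suc m)" by (rule LL_shift[OF l])
  ultimately show ?thesis unfolding VV_def by blast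
qed

lemma bv_LL: "isfree m \<Longrightarrow> bv (\<tau> + int m) \<in> LL (Suc m)"
  using LL_gen[of m "Suc m"] by (simp add: fam_last frs_eq)

lemma forced_orth: assumes nf: "\<not> isfree m" and x: "x \<in> VV m" shows "cv (\<tau> + int m) \<bullet> x = 0"
proof -
  obtain th l where xe: "x = th \<cdot>\<^sub>v pp m + l" and l: "l \<in> LL m" using x unfolding VV_def by auto
  obtain c where lc: "l = lc n (fam m) c (frs m)" using l unfolding LL_def spn_def by auto
  have p0: "cv (\<tau> + int m) \<bullet> pp m = 0" using nf isfree_iff[of m] by (simp add: pp_def)
  have "cv (\<tau> + int m) \<bullet> l = (\<Sum>i\<in>frs m. c i * (cv (\<tau> + int m) \<bullet> fam m i))"
    unfolding lc by (rule scalar_lc, auto)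
  also have "\<dots> = 0" using nf isfree_iff[of m] by (intro sum.neutral, auto simp: frs_eq fam_def)
  finally have l0: "cv (\<tau> + int m) \<bullet> l = 0" .
  have "cv (\<tau> + int m) \<bullet> x = th * (cv (\<tau> + int m) \<bullet> pp m) + cv (\<tau> + int m) \<bullet> l"
    unfolding xe using l by (simp add: scalar_prod_add_distrib[of _ n] scalar_prod_smult_distrib[of _ n])
  then show ?thesis using p0 l0 by simp
qed

lemma aa_le_ee: "aa m \<le> ee m" unfolding aa_def ee_def by (rule dim_mono[OF LL_VV])
lemma ee_le: "ee m \<le> n" unfolding ee_def by (rule dim_le)

end

context vsys begin

lemma fev_VV: "x \<in> VV l \<Longrightarrow> fev (\<tau> + int l) x i \<in> VV (l + i)"
proof (induct i)
  case (Suc i)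
  have "fev (\<tau> + int l) x (Suc i) = A (\<tau> + int (l + i)) *\<^sub>v fev (\<tau> + int l) x i" by (simp add: add.assoc)
  then show ?case using VV_shift[OF Suc(1)[OF Suc(2)]] by simp
qed simp

definition Fw :: "nat \<Rightarrow> nat set" where "Fw l = {j. j < n \<and> isfree (l + j)}"

lemma finite_Fw[simp]: "finite (Fw l)" unfolding Fw_def by auto

lemma count_ctrb: "card (Fw l) \<le> aa (l + n)"
proof -
  define H where "H j = Rr (\<tau> + int l + int j) (n - j - 1)" for j
  have Hc: "\<And>j. H j \<in> carrier_vec n" unfolding H_def by simp
  have sp: "v \<in> spn n H {..<n}" if v: "v \<in> carrier_vec n" for v
  proof -
    have "\<exists>u. traj A b u (\<tau> + int l) (0\<^sub>v n) n = v"
      using ctrb[unfolded completely_controllable_def, rule_format, where k="\<tau> + int l" and xs="0\<^sub>v n" and xf=v] v by simp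
    then obtain u where u: "traj A b u (\<tau> + int l) (0\<^sub>v n) n = v" by blast
    have "traj A b u (\<tau> + int l) (0\<^sub>v n) n = fev (\<tau> + int l) (0\<^sub>v n) n
       + lc n (\<lambda>i. Rr (\<tau> + int l + int i) (n - i - 1)) (\<lambda>i. u (\<tau> + int l + int i)) {..<n}"
      by (rule traj_decomp, simp)
    also have "\<dots> = lc n H (\<lambda>i. u (\<tau> + int l + int i)) {..<n}"
      unfolding fev_zero H_def by (intro eq_vecI, auto)
    finally show ?thesis using u by (auto intro: spnI)
  qed
  have ind: "indep n H {..<n}" by (rule span_square_indep[OF Hc sp])
  have ind2: "indep n H (Fw l)" by (rule indep_subset[OF ind], auto simp: Fw_def)
  have "H ` Fw l \<subseteq> LL (l + n)"
  proof
    fix v assume "v \<in> H ` Fw l"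
    then obtain j where j: "j \<in> Fw l" and v: "v = H j" by auto
    have "H j = fam (l + n) (l + j)" unfolding H_def fam_def by (simp add: add.assoc)
    moreover have "l + j \<in> frs (l + n)" using j by (auto simp: Fw_def frs_eq)
    ultimately show "v \<in> LL (l + n)" using LL_gen v by simp
  qed
  then show ?thesis unfolding aa_def using dim_ge[OF ind2] by auto
qed

lemma count_obsv: "ee l \<le> card (Fw l)"
proof -
  obtain f I where ind: "indep n f I" and fI: "f ` I \<subseteq> VV l" and cI: "card I = ee l"
    using dim_ex unfolding ee_def by blast
  have finI: "finite I" and fc: "\<And>k. k \<in> I \<Longrightarrow> f k \<in> carrier_vec n" using ind by (auto simp: indep_def)
  define js where "js = sorted_list_of_set (Fw l)"
  have setjs: "set js = Fw l" unfolding js_def by simp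
  have ljs: "length js = card (Fw l)" unfolding js_def by simp
  define m where "m = length js"
  define Om where "Om = (\<lambda>v. vec m (\<lambda>r. cv (\<tau> + int (l + js ! r)) \<bullet> fev (\<tau> + int l) v (js ! r)))"
  have Olc: "Om (lc n f d I) = lc m (\<lambda>k. Om (f k)) d I" for d
  proof (intro eq_vecI)
    fix r assume "r < dim_vec (lc m (\<lambda>k. Om (f k)) d I)"
    then have r: "r < m" by simp
    have "Om (lc n f d I) $ r = cv (\<tau> + int (l + js ! r)) \<bullet> lc n (\<lambda>k. fev (\<tau> + int l) (f k) (js ! r)) d I"
      unfolding Om_def using r fc by (simp add: fev_lc)
    also have "\<dots> = (\<Sum>k\<in>I. d k * (cv (\<tau> + int (l + js ! r)) \<bullet> fev (\<tau> + int l) (f k) (js ! r)))"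
      by (rule scalar_lc, insert fc, auto)
    also have "\<dots> = lc m (\<lambda>k. Om (f k)) d I $ r" using r by (simp add: Om_def)
    finally show "Om (lc n f d I) $ r = lc m (\<lambda>k. Om (f k)) d I $ r" .
  qed (simp add: Om_def)
  have inj: "x = 0\<^sub>v n" if x: "x \<in> VV l" and Ox: "Om x = 0\<^sub>v m" for x
  proof -
    have xc: "x \<in> carrier_vec n" using x by simp
    have "sys_output c (\<tau> + int l + int i) (traj A b (\<lambda>_. 0) (\<tau> + int l) x i)
        = sys_output c (\<tau> + int l + int i) (traj A b (\<lambda>_. 0) (\<tau> + int l) (0\<^sub>v n) i)" if i: "i < n" for i
    proof -
      have "traj A b (\<lambda>_. 0) (\<tau> + int l) (0\<^sub>v n) i = 0\<^sub>v n" by (rule traj_zero_input, simp)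
      then have r: "sys_output c (\<tau> + int l + int i) (traj A b (\<lambda>_. 0) (\<tau> + int l) (0\<^sub>v n) i) = 0"
        by (simp add: sys_output_eq)
      have l: "sys_output c (\<tau> + int l + int i) (traj A b (\<lambda>_. 0) (\<tau> + int l) x i)
          = cv (\<tau> + int (l + i)) \<bullet> fev (\<tau> + int l) x i"
        using xc by (simp add: traj_fev sys_output_eq add.assoc)
      have "cv (\<tau> + int (l + i)) \<bullet> fev (\<tau> + int l) x i = 0"
      proof (cases "isfree (l + i)")
        case True
        then have "i \<in> set js" using i setjs by (simp add: Fw_def)
        then obtain r where r: "r < m" "js ! r = i" unfolding m_def by (auto simp: in_set_conv_nth)
        have "Om x $ r = 0" using Ox r by simp
        then show ?thesis using r by (simp add: Om_def)
      next
        case False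
        show ?thesis by (rule forced_orth[OF False fev_VV[OF x]])
      qed
      then show ?thesis using l r by simp
    qed
    note outs = this
    have obs1: "\<forall>x1\<in>carrier_vec n. \<forall>x2\<in>carrier_vec n.
      (\<forall>i<n. sys_output c (\<tau> + int l + int i) (traj A b (\<lambda>_. 0) (\<tau> + int l) x1 i)
          = sys_output c (\<tau> + int l + int i) (traj A b (\<lambda>_. 0) (\<tau> + int l) x2 i)) \<longrightarrow> x1 = x2"
    proof -
      have o1: "\<forall>u. \<forall>x1\<in>carrier_vec n. \<forall>x2\<in>carrier_vec n.
      (\<forall>i<n. sys_output c (\<tau> + int l + int i) (traj A b u (\<tau> + int l) x1 i)
          = sys_output c (\<tau> + int l + int i) (traj A b u (\<tau> + int l) x2 i)) \<longrightarrow> x1 = x2"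
        by (rule spec[OF obsv[unfolded completely_observable_def], of "\<tau> + int l"])
      show ?thesis by (rule spec[OF o1, of "\<lambda>_. 0"])
    qed
    have "(\<forall>i<n. sys_output c (\<tau> + int l + int i) (traj A b (\<lambda>_. 0) (\<tau> + int l) x i)
          = sys_output c (\<tau> + int l + int i) (traj A b (\<lambda>_. 0) (\<tau> + int l) (0\<^sub>v n) i)) \<longrightarrow> x = 0\<^sub>v n"
      using obs1 xc by simp
    then show ?thesis using outs by simp
  qed
  have "indep m (\<lambda>k. Om (f k)) I" unfolding indep_def
  proof (intro conjI allI impI ballI)
    show "finite I" by (rule finI)
    show "\<And>k. k \<in> I \<Longrightarrow> Om (f k) \<in> carrier_vec m" by (simp add: Om_def)
    fix d k assume lc0: "lc m (\<lambda>k. Om (f k)) d I = 0\<^sub>v m" and k: "k \<in> I"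
    have "lc n f d I \<in> VV l" by (rule VV_lc[OF finI], insert fI, auto)
    moreover have "Om (lc n f d I) = 0\<^sub>v m" using Olc lc0 by simp
    ultimately have "lc n f d I = 0\<^sub>v n" by (rule inj)
    then show "d k = 0" using ind k unfolding indep_def by blast
  qed
  then have "card I \<le> m" by (rule indep_card)
  then show ?thesis using cI ljs m_def by simp
qed

lemma ee_aa: "ee l \<le> aa (l + n)" using count_obsv[of l] count_ctrb[of l] by simp

lemma lin_pp: assumes eq: "aa S = ee S" shows "pp S \<in> LL S"
proof (rule ccontr)
  assume np: "pp S \<notin> LL S"
  obtain f I where ind: "indep n f I" and fI: "f ` I \<subseteq> LL S" and cI: "card I = aa S"
    using dim_ex unfolding aa_def by blast
  have finI: "finite I" using ind by (auto simp: indep_def)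
  have "spn n f I \<subseteq> LL S"
  proof
    fix v assume "v \<in> spn n f I"
    then obtain d where "v = lc n f d I" by (auto simp: spn_def)
    then show "v \<in> LL S" using LL_lc[OF finI, of f S d] fI by auto
  qed
  then have np': "pp S \<notin> spn n f I" using np by auto
  obtain k :: nat where k: "k \<notin> I" using ex_new_if_finite[OF infinite_UNIV_nat finI] by auto
  have "indep n (f(k := pp S)) (insert k I)" by (rule indep_insert[OF ind k _ np'], simp)
  moreover have "(f(k := pp S)) ` insert k I \<subseteq> VV S" using fI LL_VV pp_VV k by auto
  ultimately have "card (insert k I) \<le> ee S" unfolding ee_def by (rule dim_ge)
  then show False using cI eq finI k by simp
qed

lemma pp_LL_prop: "pp S \<in> LL S \<Longrightarrow> pp (S + d) \<in> LL (S + d)"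
proof (induct d)
  case (Suc d)
  have "pp (Suc (S + d)) = A (\<tau> + int (S + d)) *\<^sub>v pp (S + d)" by (rule pp_shift[symmetric])
  then show ?case using LL_shift[OF Suc(1)[OF Suc(2)]] by simp
qed simp

lemma inj_case: assumes nw: "wv (\<tau> + int m) \<notin> LL m"
  shows "\<exists>f I. indep n f I \<and> f ` I \<subseteq> LL (Suc m) \<and> card I = aa m + (if isfree m then 1 else 0)"
proof -
  define t where "t = \<tau> + int m"
  obtain f I where ind: "indep n f I" and fI: "f ` I \<subseteq> LL m" and cI: "card I = aa m"
    using dim_ex unfolding aa_def by blast
  have finI: "finite I" and fc: "\<And>k. k \<in> I \<Longrightarrow> f k \<in> carrier_vec n" using ind by (auto simp: indep_def)
  have injA: "x = 0\<^sub>v n" if x: "x \<in> LL m" and Ax: "A t *\<^sub>v x = 0\<^sub>v n" for x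
  proof -
    obtain \<beta> where xb: "x = \<beta> \<cdot>\<^sub>v wv t" using ker_A[OF LL_carrier'[OF x] Ax] by blast
    show ?thesis
    proof (cases "\<beta> = 0")
      case True then show ?thesis using xb by (intro eq_vecI, auto)
    next
      case False
      have "wv t = (1 / \<beta>) \<cdot>\<^sub>v x" using False xb by (intro eq_vecI, auto)
      then have "wv t \<in> LL m" using LL_smult[OF x] by simp
      then show ?thesis using nw t_def by simp
    qed
  qed
  define g where "g k = A t *\<^sub>v f k" for k
  have gind: "indep n g I" unfolding indep_def
  proof (intro conjI allI impI ballI)
    show "finite I" by (rule finI)
    show "\<And>k. k \<in> I \<Longrightarrow> g k \<in> carrier_vec n" using fc by (simp add: g_def)
    fix d k assume lc0: "lc n g d I = 0\<^sub>v n" and k: "k \<in> I"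
    have "A t *\<^sub>v lc n f d I = lc n g d I" unfolding g_def by (rule lc_mult[OF dimA fc])
    then have "A t *\<^sub>v lc n f d I = 0\<^sub>v n" using lc0 by simp
    moreover have "lc n f d I \<in> LL m" by (rule LL_lc[OF finI], insert fI, auto)
    ultimately have "lc n f d I = 0\<^sub>v n" using injA by blast
    then show "d k = 0" using ind k unfolding indep_def by blast
  qed
  have gI: "g ` I \<subseteq> LL (Suc m)" using fI LL_shift unfolding g_def t_def by auto
  show ?thesis
  proof (cases "isfree m")
    case False
    then show ?thesis using gind gI cI by auto
  next
    case True
    have nb: "bv t \<notin> spn n g I"
    proof
      assume "bv t \<in> spn n g I"
      then obtain d where bd: "bv t = lc n g d I" by (auto simp: spn_def)
      have "lc n g d I = A t *\<^sub>v lc n f d I" unfolding g_def by (rule lc_mult[symmetric, OF dimA fc])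
      then have "bv t = A t *\<^sub>v lc n f d I" using bd by simp
      then have "wv t = dA t \<cdot>\<^sub>v lc n f d I" using b_in_image(1)[of "lc n f d I" t] by simp
      moreover have "lc n f d I \<in> LL m" by (rule LL_lc[OF finI], insert fI, auto)
      ultimately have "wv t \<in> LL m" using LL_smult by simp
      then show False using nw t_def by simp
    qed
    obtain k :: nat where k: "k \<notin> I" using ex_new_if_finite[OF infinite_UNIV_nat finI] by auto
    have "indep n (g(k := bv t)) (insert k I)" by (rule indep_insert[OF gind k _ nb], simp)
    moreover have "(g(k := bv t)) ` insert k I \<subseteq> LL (Suc m)" using gI bv_LL[OF True] k t_def by auto
    moreover have "card (insert k I) = aa m + (if isfree m then 1 else 0)" using True k finI cI by simp
    ultimately show ?thesis by blast
  qed
qed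

lemma w_case: assumes w: "wv (\<tau> + int m) \<in> LL m"
  shows "\<exists>f I. indep n f I \<and> f ` I \<subseteq> LL (Suc m) \<and> card I = aa m"
proof -
  define t where "t = \<tau> + int m"
  obtain f I where ind: "indep n f I" and fI: "f ` I \<subseteq> LL m" and cI: "card I = aa m"
    using dim_ex unfolding aa_def by blast
  have finI: "finite I" and fc: "\<And>k. k \<in> I \<Longrightarrow> f k \<in> carrier_vec n" using ind by (auto simp: indep_def)
  have fr: "isfree m"
  proof (rule ccontr)
    assume "\<not> isfree m"
    then have "cv t \<bullet> wv t = 0" using forced_orth[of m "wv t"] w LL_VV t_def by auto
    then show False using cw by simp
  qed
  show ?thesis
  proof (cases "dA t = 0")
    case False
    have injA: "x = 0\<^sub>v n" if x: "x \<in> carrier_vec n" and Ax: "A t *\<^sub>v x = 0\<^sub>v n" for x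
    proof -
      have "dA t \<cdot>\<^sub>v x = 0\<^sub>v n" using adj_A[OF x, of t] Ax mat_vec_zero[OF adj_mat(1)[OF dimA[of t]]] by simp
      note h = this
      show "x = 0\<^sub>v n"
      proof (intro eq_vecI)
        fix i assume "i < dim_vec (0\<^sub>v n :: real vec)" then have i: "i < n" by simp
        have "(dA t \<cdot>\<^sub>v x) $ i = 0" using h i by simp
        then have "dA t * x $ i = 0" using x i by simp
        then show "x $ i = 0\<^sub>v n $ i" using False i by simp
      qed (use x in auto)
    qed
    define g where "g k = A t *\<^sub>v f k" for k
    have gind: "indep n g I" unfolding indep_def
    proof (intro conjI allI impI ballI)
      show "finite I" by (rule finI)
      show "\<And>k. k \<in> I \<Longrightarrow> g k \<in> carrier_vec n" using fc by (simp add: g_def)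
      fix d k assume lc0: "lc n g d I = 0\<^sub>v n" and k: "k \<in> I"
      have "A t *\<^sub>v lc n f d I = lc n g d I" unfolding g_def by (rule lc_mult[OF dimA fc])
      then have "lc n f d I = 0\<^sub>v n" using lc0 injA[of "lc n f d I"] by simp
      then show "d k = 0" using ind k unfolding indep_def by blast
    qed
    have gI: "g ` I \<subseteq> LL (Suc m)" using fI LL_shift unfolding g_def t_def by auto
    show ?thesis using gind gI cI by blast
  next
    case True
    have "wv t \<in> spn n f I" by (rule span_max[OF LL_carrier ind fI], insert cI w t_def, auto simp: aa_def)
    then obtain \<alpha> where wa: "wv t = lc n f \<alpha> I" by (auto simp: spn_def)
    obtain k0 where k0: "k0 \<in> I" "\<alpha> k0 \<noteq> 0"
    proof (rule ccontr)
      assume "\<not> thesis"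
      with that have "\<forall>k\<in>I. \<alpha> k = 0" by blast
      then have "wv t = 0\<^sub>v n" using wa lc_zero_coef by simp
      then show False using wv_nz by simp
    qed
    define I' where "I' = I - {k0}"
    have I: "I = insert k0 I'" "k0 \<notin> I'" "finite I'" using k0 finI by (auto simp: I'_def)
    define g where "g = (\<lambda>k. A t *\<^sub>v f k)(k0 := bv t)"
    have gind: "indep n g I" unfolding indep_def
    proof (intro conjI allI impI ballI)
      show "finite I" by (rule finI)
      show "\<And>k. k \<in> I \<Longrightarrow> g k \<in> carrier_vec n" using fc by (simp add: g_def)
      fix d k assume lc0: "lc n g d I = 0\<^sub>v n" and k: "k \<in> I"
      define y where "y = lc n f d I'"
      have yc: "y \<in> carrier_vec n" unfolding y_def by simp
      have gk0: "g k0 = bv t" by (simp add: g_def)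
      have "lc n g d I = d k0 \<cdot>\<^sub>v g k0 + lc n g d I'" unfolding I(1)
        by (rule lc_insert[OF I(3) I(2)], simp add: g_def)
      also have "lc n g d I' = lc n (\<lambda>k. A t *\<^sub>v f k) d I'" by (rule lc_cong, insert I, auto simp: g_def)
      also have "\<dots> = A t *\<^sub>v y" unfolding y_def by (rule lc_mult[symmetric, OF dimA], insert fc I, auto)
      finally have "lc n g d I = d k0 \<cdot>\<^sub>v g k0 + A t *\<^sub>v y" .
      then have eq: "d k0 \<cdot>\<^sub>v bv t + A t *\<^sub>v y = 0\<^sub>v n" using lc0 gk0 by simp
      have dk0: "d k0 = 0"
      proof (rule ccontr)
        assume nz: "d k0 \<noteq> 0"
        have "bv t = A t *\<^sub>v ((- 1 / d k0) \<cdot>\<^sub>v y)"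
        proof -
          have m: "A t *\<^sub>v ((- 1 / d k0) \<cdot>\<^sub>v y) = (- 1 / d k0) \<cdot>\<^sub>v (A t *\<^sub>v y)" by (rule mult_mat_vec[OF dimA yc])
          show ?thesis unfolding m
          proof (intro eq_vecI)
            fix r assume "r < dim_vec ((- 1 / d k0) \<cdot>\<^sub>v (A t *\<^sub>v y))" then have r: "r < n" by simp
            have "(d k0 \<cdot>\<^sub>v bv t + A t *\<^sub>v y) $ r = 0" using eq r by simp
            then have "d k0 * bv t $ r + (A t *\<^sub>v y) $ r = 0" using r by simp
            then show "bv t $ r = ((- 1 / d k0) \<cdot>\<^sub>v (A t *\<^sub>v y)) $ r" using r nz by (simp add: field_simps)
          qed simp
        qed
        then have "dA t \<noteq> 0" using b_in_image(2)[of "(- 1 / d k0) \<cdot>\<^sub>v y" t] yc by simp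
        then show False using True by simp
      qed
      have Ay: "A t *\<^sub>v y = 0\<^sub>v n"
      proof (intro eq_vecI)
        fix r assume "r < dim_vec (0\<^sub>v n :: real vec)" then have r: "r < n" by simp
        have "(d k0 \<cdot>\<^sub>v bv t + A t *\<^sub>v y) $ r = 0" using eq r by simp
        then show "(A t *\<^sub>v y) $ r = 0\<^sub>v n $ r" using dk0 r by simp
      qed simp
      obtain \<beta> where yb: "y = \<beta> \<cdot>\<^sub>v wv t" using ker_A[OF yc Ay] by blast
      define d' where "d' = d(k0 := 0)"
      have "y = lc n f d' I"
      proof -
        have "lc n f d' I = lc n f d' I'" by (rule lc_mono_neutral[OF finI], auto simp: I'_def d'_def)
        also have "\<dots> = y" unfolding y_def by (rule lc_cong, insert I, auto simp: d'_def)
        finally show ?thesis by simp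
      qed
      moreover have "y = lc n f (\<lambda>i. \<beta> * \<alpha> i) I" unfolding yb wa by (simp add: lc_smult_coef)
      ultimately have lceq: "lc n f d' I = lc n f (\<lambda>i. \<beta> * \<alpha> i) I" by simp
      have eqc: "d' i = \<beta> * \<alpha> i" if "i \<in> I" for i by (rule indep_lc_eq[OF ind lceq that])
      have "\<beta> = 0" using eqc[OF k0(1)] k0(2) by (simp add: d'_def)
      then have "d' k = 0" using eqc[OF k] by simp
      then show "d k = 0" using dk0 by (cases "k = k0", auto simp: d'_def)
    qed
    have gI: "g ` I \<subseteq> LL (Suc m)" using fI LL_shift bv_LL[OF fr] unfolding g_def t_def by auto
    show ?thesis using gind gI cI by blast
  qed
qed

lemma aa_mono_step: "aa m \<le> aa (Suc m)"
proof (cases "wv (\<tau> + int m) \<in> LL m")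
  case True
  then obtain f I where fI: "indep n f I" "f ` I \<subseteq> LL (Suc m)" "card I = aa m" using w_case by blast
  then show ?thesis unfolding aa_def[of "Suc m"] using dim_ge[OF fI(1) fI(2)] by simp
next
  case False
  then obtain f I where fI: "indep n f I" "f ` I \<subseteq> LL (Suc m)" "card I = aa m + (if isfree m then 1 else 0)"
    using inj_case by blast
  then have "card I \<le> aa (Suc m)" unfolding aa_def[of "Suc m"] using dim_ge[OF fI(1) fI(2)] by simp
  then show ?thesis using \<open>card I = _\<close> by simp
qed

lemma aa_grow: assumes "isfree m" "wv (\<tau> + int m) \<notin> LL m" shows "aa m + 1 \<le> aa (Suc m)"
proof -
  obtain f I where fI: "indep n f I" "f ` I \<subseteq> LL (Suc m)" "card I = aa m + (if isfree m then 1 else 0)"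
    using inj_case[OF assms(2)] by blast
  then have "card I \<le> aa (Suc m)" unfolding aa_def[of "Suc m"] using dim_ge[OF fI(1) fI(2)] by simp
  then show ?thesis using \<open>card I = _\<close> assms(1) by simp
qed

lemma aa_mono: "i \<le> j \<Longrightarrow> aa i \<le> aa j"
  using aa_mono_step by (rule lift_Suc_mono_le)

lemma window: "\<exists>k \<le> 2 * n. aa (k * n) = ee (k * n) \<and> aa (k * n + n) = ee (k * n)"
proof (rule ccontr)
  assume no: "\<not> ?thesis"
  define \<pi> where "\<pi> k = aa (k * n) + ee (k * n)" for k
  have step: "\<pi> k + 1 \<le> \<pi> (Suc k)" if k: "k \<le> 2 * n" for k
  proof -
    have e: "k * n + n = Suc k * n" by simp
    have a1: "ee (k * n) \<le> aa (Suc k * n)" using ee_aa[of "k * n"] unfolding e .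
    have a2: "aa (k * n) \<le> ee (k * n)" by (rule aa_le_ee)
    have a3: "aa (Suc k * n) \<le> ee (Suc k * n)" by (rule aa_le_ee)
    have "\<not> (aa (k * n) = ee (k * n) \<and> aa (k * n + n) = ee (k * n))" using no k by blast
    then have "\<not> (aa (k * n) = ee (k * n) \<and> aa (Suc k * n) = ee (k * n))" unfolding e .
    then show ?thesis using a1 a2 a3 unfolding \<pi>_def by (cases "aa (k * n) = ee (k * n)", simp_all del: mult_Suc)
  qed
  have "k \<le> \<pi> k" if "k \<le> 2 * n + 1" for k
    using that
  proof (induct k)
    case (Suc k)
    then show ?case using step[of k] by simp
  qed simp
  then have "2 * n + 1 \<le> \<pi> (2 * n + 1)" by simp
  moreover have "\<pi> (2 * n + 1) \<le> 2 * n" unfolding \<pi>_def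
    using aa_le_ee[of "(2 * n + 1) * n"] ee_le[of "(2 * n + 1) * n"] by simp
  ultimately show False by simp
qed

lemma w_in_window: assumes eq: "aa S = aa (S + n)" and j: "S \<le> j" "j < S + n" and fr: "isfree j"
  shows "wv (\<tau> + int j) \<in> LL j"
proof (rule ccontr)
  assume "wv (\<tau> + int j) \<notin> LL j"
  then have "aa j + 1 \<le> aa (Suc j)" by (rule aa_grow[OF fr])
  moreover have "aa S \<le> aa j" by (rule aa_mono[OF j(1)])
  moreover have "aa (Suc j) \<le> aa (S + n)" by (rule aa_mono, insert j, simp)
  ultimately show False using eq by simp
qed

end

lemma lc_reindex: "inj_on h I \<Longrightarrow> lc n f c (h ` I) = lc n (\<lambda>i. f (h i)) (\<lambda>i. c (h i)) I"
  by (intro eq_vecI) (auto simp: sum.reindex)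

lemma indep_reindex: assumes inj: "inj_on h I" and ind: "indep n (\<lambda>i. f (h i)) I"
  shows "indep n f (h ` I)"
  unfolding indep_def
proof (intro conjI allI impI ballI)
  show "finite (h ` I)" using ind by (auto simp: indep_def)
  show "\<And>x. x \<in> h ` I \<Longrightarrow> f x \<in> carrier_vec n" using ind by (auto simp: indep_def)
  fix c x assume lc0: "lc n f c (h ` I) = 0\<^sub>v n" and x: "x \<in> h ` I"
  have "lc n (\<lambda>i. f (h i)) (\<lambda>i. c (h i)) I = 0\<^sub>v n" using lc0 lc_reindex[OF inj] by metis
  then have "\<forall>i\<in>I. c (h i) = 0" using ind unfolding indep_def by blast
  then show "c x = 0" using x by auto
qed

lemma generic:
  fixes P :: "(int \<Rightarrow> real) set" and Y :: "nat \<Rightarrow> (int \<Rightarrow> real) \<Rightarrow> real"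
  assumes ne: "u0 \<in> P"
    and aff: "\<And>u q t. u \<in> P \<Longrightarrow> q \<in> P \<Longrightarrow> (\<lambda>s. u s + t * (q s - u s)) \<in> P"
  shows "finite J \<Longrightarrow> (\<And>j. j \<in> J \<Longrightarrow> \<exists>q\<in>P. Y j q \<noteq> 0) \<Longrightarrow>
    (\<And>j u q t. j \<in> J \<Longrightarrow> u \<in> P \<Longrightarrow> q \<in> P \<Longrightarrow> Y j (\<lambda>s. u s + t * (q s - u s)) = Y j u + t * (Y j q - Y j u))
    \<Longrightarrow> \<exists>u\<in>P. \<forall>j\<in>J. Y j u \<noteq> 0"
proof (induct J rule: finite_induct)
  case empty
  then show ?case using ne by auto
next
  case (insert g J)
  obtain u where u: "u \<in> P" "\<forall>j\<in>J. Y j u \<noteq> 0" using insert by auto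
  obtain q where q: "q \<in> P" "Y g q \<noteq> 0" using insert(4)[of g] by auto
  define R where "R = (\<lambda>j. - Y j u / (Y j q - Y j u)) ` insert g J"
  have "finite R" unfolding R_def using insert by auto
  then obtain t where t: "t \<notin> R" using ex_new_if_finite[OF infinite_UNIV_char_0] by blast
  define v where "v = (\<lambda>s. u s + t * (q s - u s))"
  have vP: "v \<in> P" unfolding v_def by (rule aff[OF u(1) q(1)])
  have "Y j v \<noteq> 0" if j: "j \<in> insert g J" for j
  proof
    assume Y0: "Y j v = 0"
    have Yv: "Y j v = Y j u + t * (Y j q - Y j u)" unfolding v_def by (rule insert(5)[OF j u(1) q(1)])
    show False
    proof (cases "Y j q - Y j u = 0")
      case True
      then have "Y j u = 0" using Y0 Yv by simp
      moreover have "Y j u \<noteq> 0" using j u(2) q(2) True by auto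
      ultimately show False by simp
    next
      case False
      then have "t = - Y j u / (Y j q - Y j u)" using Y0 Yv by (simp add: field_simps)
      then have "t \<in> R" unfolding R_def using j by auto
      then show False using t by simp
    qed
  qed
  then show ?case using vP by blast
qed

context vsys begin

definition Wa :: "nat \<Rightarrow> nat set" where "Wa l = {i. l \<le> i \<and> i < l + n \<and> isfree i}"

lemma Wa_img: "Wa l = (\<lambda>j. l + j) ` Fw l"
proof -
  have "x \<in> Wa l \<longleftrightarrow> x \<in> (\<lambda>j. l + j) ` Fw l" for x
  proof
    assume "x \<in> Wa l" then show "x \<in> (\<lambda>j. l + j) ` Fw l"
      unfolding Wa_def Fw_def by (intro image_eqI[of _ _ "x - l"], auto)
  next
    assume "x \<in> (\<lambda>j. l + j) ` Fw l" then show "x \<in> Wa l" unfolding Wa_def Fw_def by auto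
  qed
  then show ?thesis by blast
qed

lemma win_indep: "indep n (fam (l + n)) (Wa l)"
proof -
  define H where "H j = Rr (\<tau> + int l + int j) (n - j - 1)" for j
  have Hc: "\<And>j. H j \<in> carrier_vec n" unfolding H_def by simp
  have sp: "v \<in> spn n H {..<n}" if v: "v \<in> carrier_vec n" for v
  proof -
    have "\<exists>u. traj A b u (\<tau> + int l) (0\<^sub>v n) n = v"
      using ctrb[unfolded completely_controllable_def, rule_format, where k="\<tau> + int l" and xs="0\<^sub>v n" and xf=v] v by simp
    then obtain u where u: "traj A b u (\<tau> + int l) (0\<^sub>v n) n = v" by blast
    have "traj A b u (\<tau> + int l) (0\<^sub>v n) n = fev (\<tau> + int l) (0\<^sub>v n) n
       + lc n (\<lambda>i. Rr (\<tau> + int l + int i) (n - i - 1)) (\<lambda>i. u (\<tau> + int l + int i)) {..<n}"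
      by (rule traj_decomp, simp)
    also have "\<dots> = lc n H (\<lambda>i. u (\<tau> + int l + int i)) {..<n}"
      unfolding fev_zero H_def by (intro eq_vecI, auto)
    finally show ?thesis using u by (auto intro: spnI)
  qed
  have ind: "indep n H {..<n}" by (rule span_square_indep[OF Hc sp])
  have ind2: "indep n H (Fw l)" by (rule indep_subset[OF ind], auto simp: Fw_def)
  have "indep n (\<lambda>j. fam (l + n) (l + j)) (Fw l)"
    using ind2 unfolding indep_def H_def fam_def lc_def by (simp add: add.assoc)
  then have "indep n (fam (l + n)) ((\<lambda>j. l + j) ` Fw l)" by (rule indep_reindex[rotated], auto)
  then show ?thesis unfolding Wa_img .
qed

lemma win_sub: "fam (l + n) ` Wa l \<subseteq> LL (l + n)"
  using LL_gen by (auto simp: Wa_def frs_eq)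

lemma card_Wa: "card (Wa l) = card (Fw l)"
  unfolding Wa_img by (rule card_image, auto)

lemma win_span: assumes c: "card (Fw l) = aa (l + n)" shows "LL (l + n) \<subseteq> spn n (fam (l + n)) (Wa l)"
proof
  fix v assume v: "v \<in> LL (l + n)"
  show "v \<in> spn n (fam (l + n)) (Wa l)"
    by (rule span_max[OF LL_carrier win_indep win_sub _ v], insert c card_Wa, auto simp: aa_def)
qed

definition adm0 :: "(int \<Rightarrow> real) \<Rightarrow> bool" where "adm0 u \<longleftrightarrow> (\<forall>i. \<not> isfree i \<longrightarrow> u (\<tau> + int i) = 0)"

definition yv :: "nat \<Rightarrow> (int \<Rightarrow> real) \<Rightarrow> real" where "yv j u = cv (\<tau> + int j) \<bullet> traj A b u \<tau> z j"

lemma traj_pp: "traj A b u \<tau> z m = pp m + lc n (fam m) (\<lambda>i. u (\<tau> + int i)) {..<m}"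
  unfolding pp_def fam_def by (rule traj_decomp[OF z])

lemma lc_adm_LL: assumes adm: "adm0 u" and j: "j \<le> m"
  shows "lc n (fam m) (\<lambda>i. u (\<tau> + int i)) {..<j} \<in> LL m"
proof -
  have "lc n (fam m) (\<lambda>i. u (\<tau> + int i)) {..<j} = lc n (fam m) (\<lambda>i. u (\<tau> + int i)) ({..<j} \<inter> frs m)"
    by (rule lc_mono_neutral, insert adm j, auto simp: adm0_def frs_eq)
  also have "\<dots> \<in> LL m" by (rule LL_lc, auto intro: LL_gen)
  finally show ?thesis .
qed

end

context vsys begin

lemma cardF: assumes S: "aa S = ee S" "aa (S + n) = ee S" shows "card (Fw S) = aa (S + n)"
  using count_obsv[of S] count_ctrb[of S] S by simp

lemma steer:
  assumes S: "aa S = ee S" "aa (S + n) = ee S"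
  and adm: "adm0 u1" and j: "j \<le> S"
  shows "\<exists>q. adm0 q \<and> (\<forall>i<j. q (\<tau> + int i) = u1 (\<tau> + int i)) \<and> traj A b q \<tau> z (S + n) = 0\<^sub>v n"
proof -
  define T where "T = S + n"
  have cF: "card (Fw S) = aa (S + n)" by (rule cardF[OF S])
  have ppT: "pp T \<in> LL T" using pp_LL_prop[OF lin_pp[OF S(1)], of n] unfolding T_def .
  define L1 where "L1 = lc n (fam T) (\<lambda>i. u1 (\<tau> + int i)) {..<j}"
  define X where "X = pp T + L1"
  have "L1 \<in> LL T" unfolding L1_def by (rule lc_adm_LL[OF adm], insert j, simp add: T_def)
  then have XL: "X \<in> LL T" unfolding X_def by (rule LL_add[OF ppT])
  then have "X \<in> spn n (fam T) (Wa S)" using win_span[OF cF] unfolding T_def by auto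
  then obtain \<gamma> where Xg: "X = lc n (fam T) \<gamma> (Wa S)" by (auto simp: spn_def)
  define q where "q s = (if s < \<tau> + int j then u1 s else if s \<in> (\<lambda>i. \<tau> + int i) ` Wa S then - \<gamma> (nat (s - \<tau>)) else 0)" for s
  have qi: "q (\<tau> + int i) = (if i < j then u1 (\<tau> + int i) else if i \<in> Wa S then - \<gamma> i else 0)" for i
    by (auto simp: q_def)
  have WaS: "\<And>i. i \<in> Wa S \<Longrightarrow> isfree i \<and> S \<le> i \<and> i < T" by (auto simp: Wa_def T_def)
  have adm_q: "adm0 q" unfolding adm0_def
  proof (intro allI impI)
    fix i assume nf: "\<not> isfree i"
    show "q (\<tau> + int i) = 0"
    proof (cases "i < j")
      case True then show ?thesis using adm nf by (simp add: qi adm0_def)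
    next
      case False then show ?thesis using nf WaS by (auto simp: qi)
    qed
  qed
  have agree: "\<forall>i<j. q (\<tau> + int i) = u1 (\<tau> + int i)" by (simp add: qi)
  have jT: "j \<le> T" using j by (simp add: T_def)
  have "traj A b q \<tau> z T = pp T + lc n (fam T) (\<lambda>i. q (\<tau> + int i)) {..<T}" by (rule traj_pp)
  also have "{..<T} = {..<j} \<union> {j..<T}" using jT by auto
  also have "lc n (fam T) (\<lambda>i. q (\<tau> + int i)) ({..<j} \<union> {j..<T})
     = lc n (fam T) (\<lambda>i. q (\<tau> + int i)) {..<j} + lc n (fam T) (\<lambda>i. q (\<tau> + int i)) {j..<T}"
    by (rule lc_union, auto)
  also have "lc n (fam T) (\<lambda>i. q (\<tau> + int i)) {..<j} = L1" unfolding L1_def by (rule lc_cong, auto simp: qi)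
  also have "lc n (fam T) (\<lambda>i. q (\<tau> + int i)) {j..<T} = lc n (fam T) (\<lambda>i. q (\<tau> + int i)) (Wa S)"
  proof (rule lc_mono_neutral)
    show "Wa S \<subseteq> {j..<T}"
    proof
      fix i assume "i \<in> Wa S" then have "S \<le> i" "i < T" using WaS by auto
      then show "i \<in> {j..<T}" using j by auto
    qed
  qed (auto simp: qi)
  also have "\<dots> = lc n (fam T) (\<lambda>i. - \<gamma> i) (Wa S)"
  proof (rule lc_cong)
    fix i assume i: "i \<in> Wa S"
    then have "S \<le> i" using WaS by auto
    then show "q (\<tau> + int i) = - \<gamma> i" using i j by (simp add: qi)
  qed simp
  also have "\<dots> = - X" unfolding Xg by (intro eq_vecI, auto simp: sum_negf)
  also have "pp T + (L1 + - X) = 0\<^sub>v n" unfolding X_def L1_def by (intro eq_vecI, auto)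
  finally show ?thesis using adm_q agree unfolding T_def by blast
qed

lemma wit_before:
  assumes S: "aa S = ee S" "aa (S + n) = ee S" and j: "j < S" and fr: "isfree j"
  shows "\<exists>q. adm0 q \<and> traj A b q \<tau> z (S + n) = 0\<^sub>v n \<and> yv j q \<noteq> 0"
proof -
  obtain u1 where adm: "adm0 u1" and y1: "yv j u1 \<noteq> 0"
  proof (cases "cv (\<tau> + int j) \<bullet> pp j \<noteq> 0")
    case True
    have "adm0 (\<lambda>_. 0)" by (simp add: adm0_def)
    moreover have "yv j (\<lambda>_. 0) \<noteq> 0" using True by (simp add: yv_def traj_fev[OF z] pp_def)
    ultimately show ?thesis using that by blast
  next
    case False
    then obtain i where i: "i < j" "isfree i" "cv (\<tau> + int j) \<bullet> Rr (\<tau> + int i) (j - i - 1) \<noteq> 0"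
      using fr isfree_iff[of j] by (auto simp: pp_def)
    define u1 where "u1 s = (if s = \<tau> + int i then 1 else (0::real))" for s
    have "adm0 u1" using i(2) by (auto simp: adm0_def u1_def)
    moreover have "traj A b u1 \<tau> z j = pp j + fam j i"
    proof -
      have "traj A b u1 \<tau> z j = pp j + lc n (fam j) (\<lambda>k. u1 (\<tau> + int k)) {..<j}" by (rule traj_pp)
      also have "lc n (fam j) (\<lambda>k. u1 (\<tau> + int k)) {..<j} = lc n (fam j) (\<lambda>k. if k = i then 1 else 0) {..<j}"
        by (rule lc_cong, auto simp: u1_def)
      also have "\<dots> = 1 \<cdot>\<^sub>v fam j i" by (rule lc_single, insert i, auto)
      finally show ?thesis by simp
    qed
    then have "yv j u1 = cv (\<tau> + int j) \<bullet> pp j + cv (\<tau> + int j) \<bullet> fam j i"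
      by (simp add: yv_def scalar_prod_add_distrib[of _ n])
    then have "yv j u1 \<noteq> 0" using False i(3) by (simp add: fam_def)
    ultimately show ?thesis using that by blast
  qed
  obtain q where q: "adm0 q" "\<forall>i<j. q (\<tau> + int i) = u1 (\<tau> + int i)" "traj A b q \<tau> z (S + n) = 0\<^sub>v n"
    using steer[OF S adm, of j] j by auto
  have "traj A b q \<tau> z j = traj A b u1 \<tau> z j" by (rule traj_cong, use q(2) in auto)
  then have "yv j q = yv j u1" by (simp add: yv_def)
  then show ?thesis using q y1 by auto
qed

lemma wit_in:
  assumes S: "aa S = ee S" "aa (S + n) = ee S" and j: "S \<le> j" "j < S + n" and fr: "isfree j"
  shows "\<exists>q. adm0 q \<and> traj A b q \<tau> z (S + n) = 0\<^sub>v n \<and> yv j q \<noteq> 0"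
proof -
  define t where "t = \<tau> + int j"
  have eqa: "aa S = aa (S + n)" using S by simp
  have w: "wv t \<in> LL j" unfolding t_def by (rule w_in_window[OF eqa j fr])
  have ppj: "pp j \<in> LL j" using pp_LL_prop[OF lin_pp[OF S(1)], of "j - S"] j by simp
  have "wv t - pp j \<in> LL j" by (rule LL_diff[OF w ppj])
  then obtain \<gamma> where g: "wv t - pp j = lc n (fam j) \<gamma> (frs j)" unfolding LL_def spn_def by auto
  define q where "q s = (if s < \<tau> + int j then (if \<tau> \<le> s \<and> nat (s - \<tau>) \<in> frs j then \<gamma> (nat (s - \<tau>)) else 0)
     else if s = \<tau> + int j then - dA t else 0)" for s
  have qi: "q (\<tau> + int i) = (if i < j then (if i \<in> frs j then \<gamma> i else 0) else if i = j then - dA t else 0)" for i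
    by (simp add: q_def)
  have adm: "adm0 q" unfolding adm0_def
  proof (intro allI impI)
    fix i assume nf: "\<not> isfree i"
    then have "i \<notin> frs j" "i \<noteq> j" using fr by (auto simp: frs_eq)
    then show "q (\<tau> + int i) = 0" by (simp add: qi)
  qed
  have tj: "traj A b q \<tau> z j = wv t"
  proof -
    have "traj A b q \<tau> z j = pp j + lc n (fam j) (\<lambda>i. q (\<tau> + int i)) {..<j}" by (rule traj_pp)
    also have "lc n (fam j) (\<lambda>i. q (\<tau> + int i)) {..<j} = lc n (fam j) (\<lambda>i. q (\<tau> + int i)) (frs j)"
      by (rule lc_mono_neutral, insert frs_sub[of j], auto simp: qi)
    also have "\<dots> = lc n (fam j) \<gamma> (frs j)" by (rule lc_cong, insert frs_sub[of j], auto simp: qi)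
    also have "\<dots> = wv t - pp j" using g by simp
    also have "pp j + (wv t - pp j) = wv t" by (intro eq_vecI, auto)
    finally show ?thesis .
  qed
  have tj1: "traj A b q \<tau> z (Suc j) = 0\<^sub>v n"
  proof -
    have "traj A b q \<tau> z (Suc j) = A t *\<^sub>v wv t + (- dA t) \<cdot>\<^sub>v bv t"
      by (simp only: traj_Suc tj, simp add: qi t_def)
    also have "\<dots> = 0\<^sub>v n" unfolding A_w by (intro eq_vecI, auto)
    finally show ?thesis .
  qed
  have "traj A b q \<tau> z (S + n) = 0\<^sub>v n"
  proof -
    have e: "S + n = Suc j + (S + n - Suc j)" using j by simp
    have "traj A b q \<tau> z (S + n) = traj A b q (\<tau> + int (Suc j)) (traj A b q \<tau> z (Suc j)) (S + n - Suc j)"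
      by (subst e, rule traj_comp)
    also have "\<dots> = 0\<^sub>v n" unfolding tj1
    proof (rule traj_zero_input)
      fix i
      show "q (\<tau> + int (Suc j) + int i) = 0" using qi[of "Suc j + i"] by (simp add: algebra_simps)
    qed
    finally show ?thesis .
  qed
  moreover have "yv j q \<noteq> 0" using tj cw[of t] by (simp add: yv_def t_def)
  ultimately show ?thesis using adm by blast
qed

lemma kill: "\<exists>F T. T \<le> 2 * n * n + n \<and> cl_traj A b c F \<tau> z T = 0\<^sub>v n"
proof -
  obtain k where k: "k \<le> 2 * n" "aa (k * n) = ee (k * n)" "aa (k * n + n) = ee (k * n)" using window by blast
  define S where "S = k * n"
  define T where "T = S + n"
  have S: "aa S = ee S" "aa (S + n) = ee S" using k unfolding S_def by auto
  define P where "P = {u. adm0 u \<and> traj A b u \<tau> z T = 0\<^sub>v n}"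
  define J where "J = {j. j < T \<and> isfree j}"
  have "adm0 (\<lambda>_. 0)" by (simp add: adm0_def)
  then obtain u0 where "adm0 u0" "traj A b u0 \<tau> z T = 0\<^sub>v n" using steer[OF S, of "\<lambda>_. 0" 0] unfolding T_def by auto
  then have u0: "u0 \<in> P" unfolding P_def by auto
  have aff: "(\<lambda>s. u s + t * (q s - u s)) \<in> P" if "u \<in> P" "q \<in> P" for u q t
  proof -
    have "adm0 (\<lambda>s. u s + t * (q s - u s))" using that by (simp add: P_def adm0_def)
    moreover have "traj A b (\<lambda>s. u s + t * (q s - u s)) \<tau> z T = 0\<^sub>v n"
      using that unfolding P_def traj_affine[OF z] by (intro eq_vecI, auto)
    ultimately show ?thesis unfolding P_def by auto
  qed
  have wit: "\<exists>q\<in>P. yv j q \<noteq> 0" if "j \<in> J" for j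
  proof (cases "j < S")
    case True
    then show ?thesis using wit_before[OF S True] that unfolding P_def J_def T_def by auto
  next
    case False
    then show ?thesis using wit_in[OF S, of j] that unfolding P_def J_def T_def by auto
  qed
  have Yaff: "yv j (\<lambda>s. u s + t * (q s - u s)) = yv j u + t * (yv j q - yv j u)" for j u q t
    unfolding yv_def traj_affine[OF z] using z
    by (simp add: scalar_prod_def sum.distrib sum_distrib_left sum_subtractf algebra_simps)
  have "finite J" unfolding J_def by auto
  then obtain u where u: "u \<in> P" "\<forall>j\<in>J. yv j u \<noteq> 0"
    using generic[OF u0 aff, of J yv] wit Yaff by blast
  define F where "F s = u s / (cv s \<bullet> traj A b u \<tau> z (nat (s - \<tau>)))" for s
  have "cl_traj A b c F \<tau> z T = traj A b u \<tau> z T"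
  proof (rule cl_eq_traj[OF z])
    fix i assume i: "i < T"
    show "F (\<tau> + int i) * (cv (\<tau> + int i) \<bullet> traj A b u \<tau> z i) = u (\<tau> + int i)"
    proof (cases "isfree i")
      case True
      then have "yv i u \<noteq> 0" using u(2) i unfolding J_def by auto
      then show ?thesis by (simp add: F_def yv_def)
    next
      case False
      then have "u (\<tau> + int i) = 0" using u(1) unfolding P_def adm0_def by auto
      then show ?thesis by (simp add: F_def)
    qed
  qed
  also have "\<dots> = 0\<^sub>v n" using u(1) unfolding P_def by auto
  finally have "cl_traj A b c F \<tau> z T = 0\<^sub>v n" .
  moreover have "T \<le> 2 * n * n + n" unfolding T_def S_def using k(1) by (simp add: mult_le_mono1)
  ultimately show ?thesis by blast
qed

end

context sys begin

lemma kill_vec: assumes z: "z \<in> carrier_vec n"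
  shows "\<exists>F T. T \<le> 2 * n * n + n \<and> cl_traj A b c F t z T = 0\<^sub>v n"
proof -
  interpret vsys n A b c t z by (unfold_locales, rule z)
  show ?thesis by (rule kill)
qed

definition BB :: nat where "BB = n ^ 3 + n ^ 2 + n"

lemma BB_ge: "2 * n * n + n \<le> BB"
proof -
  have "n * n \<le> n * n * n" by (cases n, auto)
  then show ?thesis unfolding BB_def by (simp add: power2_eq_square power3_eq_cube)
qed

lemma kill_B: assumes z: "z \<in> carrier_vec n"
  shows "\<exists>F. cl_traj A b c F t z BB = 0\<^sub>v n"
proof -
  obtain F T where T: "T \<le> 2 * n * n + n" and F: "cl_traj A b c F t z T = 0\<^sub>v n" using kill_vec[OF z] by blast
  have e: "BB = T + (BB - T)" using T BB_ge by simp
  have "cl_traj A b c F t z BB = cl_traj A b c F (t + int T) (cl_traj A b c F t z T) (BB - T)"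
    by (subst e, rule cl_comp)
  also have "\<dots> = 0\<^sub>v n" unfolding F by (rule cl_zero)
  finally show ?thesis by blast
qed

lemma cl_mat_carrier: "A t + f \<cdot>\<^sub>m (b t * c t) \<in> carrier_mat n n"
  using dimA[of t] dimb[of t] dimc[of t] by auto

lemma cl_lc: "(\<And>i. i \<in> I \<Longrightarrow> f i \<in> carrier_vec n) \<Longrightarrow>
  cl_traj A b c F t (lc n f d I) m = lc n (\<lambda>i. cl_traj A b c F t (f i) m) d I"
proof (induct m)
  case (Suc m)
  then show ?case by (simp, subst lc_mult[OF cl_mat_carrier], auto)
qed simp

lemma lc_unit: "x \<in> carrier_vec n \<Longrightarrow> lc n (unit_vec n) (\<lambda>i. x $ i) {..<n} = x"
proof (intro eq_vecI)
  fix r assume x: "x \<in> carrier_vec n" and "r < dim_vec x"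
  then have r: "r < n" by simp
  have "lc n (unit_vec n) (\<lambda>i. x $ i) {..<n} $ r = (\<Sum>i<n. x $ i * unit_vec n i $ r)" using r by simp
  also have "\<dots> = (\<Sum>i<n. if i = r then x $ r else 0)" by (rule sum.cong, auto simp: r)
  also have "\<dots> = x $ r" using r by simp
  finally show "lc n (unit_vec n) (\<lambda>i. x $ i) {..<n} $ r = x $ r" .
qed auto

lemma block_rounds: "r \<le> n \<Longrightarrow> \<exists>F. \<forall>i<r. cl_traj A b c F t0 (unit_vec n i) (r * BB) = 0\<^sub>v n"
proof (induct r)
  case 0 then show ?case by auto
next
  case (Suc r)
  then obtain F where F: "\<forall>i<r. cl_traj A b c F t0 (unit_vec n i) (r * BB) = 0\<^sub>v n" by auto
  define \<tau> where "\<tau> = t0 + int (r * BB)"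
  define v where "v = cl_traj A b c F t0 (unit_vec n r) (r * BB)"
  have vc: "v \<in> carrier_vec n" unfolding v_def by simp
  obtain G where G: "cl_traj A b c G \<tau> v BB = 0\<^sub>v n" using kill_B[OF vc] by blast
  define F' where "F' s = (if s < \<tau> then F s else G s)" for s
  have "cl_traj A b c F' t0 (unit_vec n i) (Suc r * BB) = 0\<^sub>v n" if i: "i < Suc r" for i
  proof -
    have "cl_traj A b c F' t0 (unit_vec n i) (Suc r * BB)
      = cl_traj A b c F' \<tau> (cl_traj A b c F' t0 (unit_vec n i) (r * BB)) BB"
      unfolding \<tau>_def by (subst mult_Suc, subst add.commute, rule cl_comp)
    also have "cl_traj A b c F' t0 (unit_vec n i) (r * BB) = cl_traj A b c F t0 (unit_vec n i) (r * BB)"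
    proof (rule cl_cong)
      fix k assume "k < r * BB"
      then have "int k < int (r * BB)" by (simp only: of_nat_less_iff)
      then have "t0 + int k < \<tau>" unfolding \<tau>_def by linarith
      then show "F' (t0 + int k) = F (t0 + int k)" by (simp add: F'_def)
    qed
    also have "cl_traj A b c F' \<tau> (cl_traj A b c F t0 (unit_vec n i) (r * BB)) BB
       = cl_traj A b c G \<tau> (cl_traj A b c F t0 (unit_vec n i) (r * BB)) BB"
      by (rule cl_cong, auto simp: F'_def)
    also have "\<dots> = 0\<^sub>v n"
    proof (cases "i < r")
      case True
      then show ?thesis using F cl_zero by simp
    next
      case False
      then have "i = r" using i by simp
      then show ?thesis using G unfolding v_def by simp
    qed
    finally show ?thesis .
  qed
  then show ?case by blast
qed

lemma block: "\<exists>F. \<forall>x\<in>carrier_vec n. cl_traj A b c F t0 x (n * BB) = 0\<^sub>v n"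
proof -
  obtain F where F: "\<forall>i<n. cl_traj A b c F t0 (unit_vec n i) (n * BB) = 0\<^sub>v n"
    using block_rounds[of n] by auto
  have "cl_traj A b c F t0 x (n * BB) = 0\<^sub>v n" if x: "x \<in> carrier_vec n" for x
  proof -
    have "cl_traj A b c F t0 x (n * BB) = cl_traj A b c F t0 (lc n (unit_vec n) (\<lambda>i. x $ i) {..<n}) (n * BB)"
      using lc_unit[OF x] by simp
    also have "\<dots> = lc n (\<lambda>i. cl_traj A b c F t0 (unit_vec n i) (n * BB)) (\<lambda>i. x $ i) {..<n}"
      by (rule cl_lc, auto)
    also have "\<dots> = 0\<^sub>v n" using F by (intro eq_vecI, auto)
    finally show ?thesis .
  qed
  then show ?thesis by blast
qed

lemma main:
  assumes n: "n > 0"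
  shows "\<exists>F :: int \<Rightarrow> real. \<forall>k. \<forall>xi \<in> carrier_vec n. cl_traj A b c F k xi (2 * (n^4 + n^3 + n^2)) = 0\<^sub>v n"
proof -
  define L where "L = n * BB"
  have L4: "n^4 + n^3 + n^2 = L" unfolding L_def BB_def by (simp add: algebra_simps power_def)
  have Lpos: "L > 0" using n unfolding L_def BB_def by simp
  define Li where "Li = int L"
  have Lipos: "Li > 0" using Lpos by (simp add: Li_def)
  have "\<forall>j::int. \<exists>F. \<forall>x\<in>carrier_vec n. cl_traj A b c F (j * Li) x L = 0\<^sub>v n"
    using block unfolding L_def by blast
  then obtain Fs where Fs: "\<And>j x. x \<in> carrier_vec n \<Longrightarrow> cl_traj A b c (Fs j) (j * Li) x L = 0\<^sub>v n"
    by metis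
  define F where "F s = Fs (s div Li) s" for s
  have "cl_traj A b c F k xi (2 * L) = 0\<^sub>v n" if xi: "xi \<in> carrier_vec n" for k xi
  proof -
    define j where "j = - ((- k) div Li)"
    define d where "d = nat ((- k) mod Li)"
    have dm: "(- k) mod Li \<ge> 0" "(- k) mod Li < Li" using Lipos by auto
    have jk: "k + int d = j * Li"
    proof -
      have h: "(- k) div Li * Li + (- k) mod Li = - k" by (rule div_mult_mod_eq)
      have "int d = (- k) mod Li" using dm by (simp add: d_def)
      then have "k + int d = - ((- k) div Li * Li)" using h by linarith
      then show ?thesis unfolding j_def by simp
    qed
    have dL: "d < L" using dm unfolding d_def Li_def by simp
    have e: "2 * L = d + (L + (L - d))" using dL by simp
    have "cl_traj A b c F k xi (2 * L) = cl_traj A b c F (k + int d) (cl_traj A b c F k xi d) (L + (L - d))"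
      by (subst e, rule cl_comp)
    also have "\<dots> = cl_traj A b c F (k + int d + int L) (cl_traj A b c F (k + int d) (cl_traj A b c F k xi d) L) (L - d)"
      by (rule cl_comp)
    also have "cl_traj A b c F (k + int d) (cl_traj A b c F k xi d) L = cl_traj A b c (Fs j) (j * Li) (cl_traj A b c F k xi d) L"
      unfolding jk
    proof (rule cl_cong)
      fix i assume i: "i < L"
      have "(j * Li + int i) div Li = j" using i Lipos unfolding Li_def
        by (simp add: div_add_self1 del: of_nat_less_iff)
      then show "F (j * Li + int i) = Fs j (j * Li + int i)" by (simp add: F_def)
    qed
    also have "\<dots> = 0\<^sub>v n" by (rule Fs, insert xi, simp)
    also have "cl_traj A b c F (k + int d + int L) (0\<^sub>v n) (L - d) = 0\<^sub>v n" by (rule cl_zero)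
    finally show ?thesis .
  qed
  then show ?thesis unfolding L4 by blast
qed

end

theorem theorem5:
  fixes n :: nat
    and A b c :: "int \<Rightarrow> real mat"
  assumes dimA: "\<And>k. A k \<in> carrier_mat n n"
    and dimb: "\<And>k. b k \<in> carrier_mat n 1"
    and dimc: "\<And>k. c k \<in> carrier_mat 1 n"
    and ctrb: "completely_controllable n A b"
    and obsv: "completely_observable n A b c"
    and adj: "\<And>k. (c k * adj_mat (A k) * b k) $$ (0, 0) \<noteq> 0"
  shows "\<exists>F :: int \<Rightarrow> real. \<forall>k. \<forall>xi \<in> carrier_vec n.
           cl_traj A b c F k xi (2 * (n^4 + n^3 + n^2)) = 0\<^sub>v n"
proof (cases "n = 0")
  case True
  show ?thesis
  proof (intro exI[of _ "\<lambda>_. 0"] allI ballI)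
    fix k :: int and xi :: "real vec" assume xi: "xi \<in> carrier_vec n"
    show "cl_traj A b c (\<lambda>_. 0) k xi (2 * (n ^ 4 + n ^ 3 + n ^ 2)) = 0\<^sub>v n"
      using xi True by (intro eq_vecI, auto)
  qed
next
  case False
  interpret sys n A b c by (unfold_locales; fact)
  show ?thesis using main False by simp
qed

end
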